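(* Let $J_j(x)=\tfrac{c_j}{2}x^2+\bar c_jx$ with $c_j>0$, and let $\rho\in(0,\,4\min_jc_j)$. Consider the system in the variables $z=(\hat q,\tilde\theta)\in\mathbb{R}^n\times\mathbb{R}^{|\mathcal E|}$ and $\sigma=(\lambda,\omega,\alpha,\eta)\in\mathbb{R}\times\mathbb{R}^n\times\mathbb{R}^n\times\mathbb{R}^{2|\mathcal E|}$, with $\pi:=\lambda\mathbf 1-H\eta-\omega$ and $q:=\tfrac1\rho(\pi-\alpha)+\hat q$: \[ \dot{\tilde\theta}=C^T\omega,\qquad M\dot\omega=q-d-D\omega-CB\tilde\theta, \] \[ \tau^\alpha_j\dot\alpha_j=q_j-\frac{\pi_j-\bar c_j}{c_j}\ (j=1,\dots,n),\qquad T^{\hat q}\dot{\hat q}=\pi-\alpha, \] \[ T^\lambda\dot\lambda=-\mathbf 1^T(q-d),\qquad T^\eta\dot\eta=\big[H^T(q-d)-F\big]^+_\eta . \] Let $\mathbb I=\{(z,\sigma):\eta\ge0\}$ and let $\mathbb E$ be the set of equilibrium points of this system, assumed nonempty. Then $\mathbb E$ is globally asymptotically stable on $\mathbb I$; in particular, every trajectory $(z(t),\sigma(t))$ starting in $\mathbb I$ remains bounded for $t\ge0$ and converges, as $t\to\infty$, to a single equilibrium point $(z^*,\sigma^* )\in\mathbb E$.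
   Context: $(\mathcal N,\mathcal E)$ is a connected directed graph with $\mathcal N=\{1,\dots,n\}$; $C$ is its incidence matrix ($C_{j,e}=1$ if $e=(j,k)$, $-1$ if $e=(k,j)$, $0$ otherwise). $B$, $D$, $M$ are diagonal with positive diagonal entries; $T^{\hat q},T^\lambda,T^\eta$ are diagonal (or positive scalar) with positive entries, and $\tau^\alpha_j>0$. $L:=CBC^T$, $H\in\mathbb{R}^{n\times2|\mathcal E|}$ with $H^T=\begin{bmatrix} BC^TL^\dagger\\ -BC^TL^\dagger\end{bmatrix}$ ($L^\dagger$ Moore–Penrose inverse), $F=\begin{bmatrix}\overline F\\-\underline F\end{bmatrix}$, $d\in\mathbb{R}^n$ given. Projection: for vectors $y,u$, $([y]^+_u)_e=y_e$ if $y_e>0$ or $u_e>0$, and $0$ otherwise; it keeps $\eta(t)\ge0$ when $\eta(0)\ge0$. Solutions are understood in the Carathéodory sense. *)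

theory Defs
  imports "HOL-Analysis.Analysis"
begin

text \<open>Directed graph: nodes are the elements of the finite type 'n, edges the elements
  of the finite type 'e; edge e goes from src e to tgt e.\<close>

definition digraph_ok :: "('e::finite \<Rightarrow> 'n::finite) \<Rightarrow> ('e \<Rightarrow> 'n) \<Rightarrow> bool" where
  "digraph_ok src tgt \<longleftrightarrow>
     (\<forall>e. src e \<noteq> tgt e) \<and> inj (\<lambda>e. (src e, tgt e))"

definition graph_connected :: "('e::finite \<Rightarrow> 'n::finite) \<Rightarrow> ('e \<Rightarrow> 'n) \<Rightarrow> bool" where
  "graph_connected src tgt \<longleftrightarrow>
     (\<forall>j k. (j, k) \<in> ({(src e, tgt e) | e. True} \<union> {(tgt e, src e) | e. True})\<^sup>*)"

definition incidence :: "('e::finite \<Rightarrow> 'n::finite) \<Rightarrow> ('e \<Rightarrow> 'n) \<Rightarrow> real^'e^'n" where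
  "incidence src tgt = (\<chi> j e. if j = src e then 1 else if j = tgt e then -1 else 0)"

definition pos_diag :: "real^'a::finite^'a \<Rightarrow> bool" where
  "pos_diag A \<longleftrightarrow> (\<forall>i j. i \<noteq> j \<longrightarrow> A $ i $ j = 0) \<and> (\<forall>i. A $ i $ i > 0)"

definition mp_inverse :: "real^'m::finite^'n::finite \<Rightarrow> real^'n^'m" where
  "mp_inverse A = (THE X. A ** X ** A = A \<and> X ** A ** X = X \<and>
                          transpose (A ** X) = A ** X \<and> transpose (X ** A) = X ** A)"

text \<open>H with H^T = [B C^T L^+ ; - B C^T L^+], L = C B C^T.\<close>
definition Hmat :: "real^'e::finite^'n::finite \<Rightarrow> real^'e^'e \<Rightarrow> real^('e + 'e)^'n" where
  "Hmat C B = (let P = B ** transpose C ** mp_inverse (C ** B ** transpose C) in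
     (\<chi> j i. case i of Inl e \<Rightarrow> P $ e $ j | Inr e \<Rightarrow> - (P $ e $ j)))"

definition Fvec :: "real^'e::finite \<Rightarrow> real^'e \<Rightarrow> real^('e + 'e)" where
  "Fvec Fup Flow = (\<chi> i. case i of Inl e \<Rightarrow> Fup $ e | Inr e \<Rightarrow> - (Flow $ e))"

definition proj_plus :: "real^'a::finite \<Rightarrow> real^'a \<Rightarrow> real^'a" where
  "proj_plus y u = (\<chi> e. if y $ e > 0 \<or> u $ e > 0 then y $ e else 0)"

text \<open>State (qhat, theta, lambda, omega, alpha, eta).\<close>
type_synonym ('n, 'e) state =
  "(real^'n) \<times> (real^'e) \<times> real \<times> (real^'n) \<times> (real^'n) \<times> (real^('e + 'e))"

text \<open>Left-hand weight operator K: the system reads K (x') = f x.\<close>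
definition Kop :: "real^'n::finite^'n \<Rightarrow> real \<Rightarrow> real^'n^'n \<Rightarrow> real^'n \<Rightarrow> real^('e::finite + 'e)^('e + 'e)
    \<Rightarrow> ('n, 'e) state \<Rightarrow> ('n, 'e) state" where
  "Kop Tq Tl M tau Teta = (\<lambda>(qh, th, l, om, al, et).
     (Tq *v qh, th, Tl * l, M *v om, (\<chi> j. tau $ j * al $ j), Teta *v et))"

definition rhs :: "('e::finite \<Rightarrow> 'n::finite) \<Rightarrow> ('e \<Rightarrow> 'n) \<Rightarrow> real^'e^'e \<Rightarrow> real^'n^'n
    \<Rightarrow> real^'n \<Rightarrow> real^'n \<Rightarrow> real \<Rightarrow> real^'n \<Rightarrow> real^'e \<Rightarrow> real^'e
    \<Rightarrow> ('n, 'e) state \<Rightarrow> ('n, 'e) state" where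
  "rhs src tgt B D c cbar \<rho> d Fup Flow = (\<lambda>(qh, th, l, om, al, et).
     (let C = incidence src tgt; H = Hmat C B; F = Fvec Fup Flow;
          \<pi> = (\<chi> j. l) - H *v et - om;
          q = (1 / \<rho>) *\<^sub>R (\<pi> - al) + qh
      in (\<pi> - al,
          transpose C *v om,
          - (\<Sum>j\<in>UNIV. (q - d) $ j),
          q - d - D *v om - C *v (B *v th),
          (\<chi> j. q $ j - (\<pi> $ j - cbar $ j) / c $ j),
          proj_plus (transpose H *v (q - d) - F) et)))"

text \<open>Caratheodory solution on [0,inf) of K x' = f x: x is locally absolutely continuous
  with K x'(t) = f(x(t)) for a.e. t >= 0, written in the equivalent integral form
  (K linear and invertible).\<close>
definition cara_sol :: "('a::euclidean_space \<Rightarrow> 'a) \<Rightarrow> ('a \<Rightarrow> 'a) \<Rightarrow> (real \<Rightarrow> 'a) \<Rightarrow> bool" where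
  "cara_sol K f x \<longleftrightarrow>
     (\<forall>t\<ge>0. (\<lambda>s. f (x s)) absolutely_integrable_on {0..t} \<and>
             K (x t) - K (x 0) = integral {0..t} (\<lambda>s. f (x s)))"

definition Iset :: "('n::finite, 'e::finite) state set" where
  "Iset = {(qh, th, l, om, al, et). \<forall>i. et $ i \<ge> 0}"

end

theory Submission
  imports Defs
begin

lemma telescope_mono:
  fixes \<phi> :: "real \<Rightarrow> real"
  assumes ab: "a \<le> b" and C: "C \<ge> 0"
    and step: "\<And>t h. a \<le> t \<Longrightarrow> 0 \<le> h \<Longrightarrow> t + h \<le> b \<Longrightarrow> \<phi> (t + h) - \<phi> t \<le> C * h\<^sup>2"
  shows "\<phi> b \<le> \<phi> a"
proof (rule ccontr)
  assume "\<not> \<phi> b \<le> \<phi> a"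
  hence gap: "\<phi> b - \<phi> a > 0" by simp
  obtain N :: nat where N: "real N > C * (b - a)\<^sup>2 / (\<phi> b - \<phi> a)" using reals_Archimedean2 by blast
  have Npos: "N > 0" proof -
    have "C * (b - a)\<^sup>2 / (\<phi> b - \<phi> a) \<ge> 0" using C gap by simp
    thus ?thesis using N by linarith
  qed
  define h where "h = (b - a) / N"
  have h0: "h \<ge> 0" using ab Npos by (simp add: h_def)
  have ind: "k \<le> N \<Longrightarrow> \<phi> (a + k * h) \<le> \<phi> a + k * C * h\<^sup>2" for k
  proof (induction k)
    case 0 then show ?case by simp
  next
    case (Suc k)
    have "a + real (Suc k) * h \<le> b"
    proof -
      have "real (Suc k) * h \<le> N * h" using Suc.prems h0 by (intro mult_right_mono) auto
      also have "N * h = b - a" using Npos by (simp add: h_def)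
      finally show ?thesis by simp
    qed
    hence "\<phi> (a + k * h + h) - \<phi> (a + k * h) \<le> C * h\<^sup>2"
      using h0 by (intro step) (auto simp: algebra_simps)
    moreover have "a + real (Suc k) * h = a + k * h + h" by (simp add: algebra_simps)
    ultimately show ?case using Suc by (simp add: algebra_simps)
  qed
  have "\<phi> b \<le> \<phi> a + N * C * h\<^sup>2" using ind[of N] Npos by (simp add: h_def)
  also have "N * C * h\<^sup>2 = C * (b - a)\<^sup>2 / N" using Npos by (simp add: h_def power2_eq_square field_simps)
  finally have "\<phi> b - \<phi> a \<le> C * (b - a)\<^sup>2 / N" by simp
  hence "real N * (\<phi> b - \<phi> a) \<le> C * (b - a)\<^sup>2" using Npos by (simp add: field_simps)
  moreover have "C * (b - a)\<^sup>2 < real N * (\<phi> b - \<phi> a)" using N gap by (simp add: field_simps)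
  ultimately show False by simp
qed

lemma integral_norm_const_bound:
  fixes g :: "real \<Rightarrow> 'a::euclidean_space"
  assumes "g integrable_on {s..t}" "s \<le> t" "\<And>r. r \<in> {s..t} \<Longrightarrow> norm (g r) \<le> G"
  shows "norm (integral {s..t} g) \<le> G * (t - s)"
proof -
  have "norm (integral {s..t} g) \<le> integral {s..t} (\<lambda>_. G)"
    by (rule integral_norm_bound_integral) (use assms in auto)
  also have "\<dots> = G * (t - s)" using assms(2) by simp
  finally show ?thesis .
qed

lemma lyap_interval:
  fixes x g :: "real \<Rightarrow> 'a::euclidean_space" and V :: "'a \<Rightarrow> real"
    and dV :: "'a \<Rightarrow> 'a \<Rightarrow> real" and w :: "real \<Rightarrow> real"
  assumes ab: "a \<le> b"
    and gint: "g integrable_on {a..b}"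
    and xeq: "\<And>t. t \<in> {a..b} \<Longrightarrow> x t = x a + integral {a..t} g"
    and gb: "\<And>s. s \<in> {a..b} \<Longrightarrow> norm (g s) \<le> G" and G: "G \<ge> 0"
    and wc: "continuous_on {a..b} w"
    and lin: "\<And>z. bounded_linear (dV z)"
    and Vq: "\<And>z \<Delta>. V (z + \<Delta>) \<le> V z + dV z \<Delta> + Cq * (norm \<Delta>)\<^sup>2"
    and dVL: "\<And>z z' v. dV z v - dV z' v \<le> Lq * norm (z - z') * norm v"
    and pt: "\<And>s. s \<in> {a..b} \<Longrightarrow> dV (x s) (g s) \<le> - w s"
    and Cq: "Cq \<ge> 0" and Lq: "Lq \<ge> 0"
  shows "V (x b) + integral {a..b} w \<le> V (x a)"
proof -
  define \<phi> where "\<phi> t = V (x t) + integral {a..t} w" for t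
  have diff: "x u - x t = integral {t..u} g" if "a \<le> t" "t \<le> u" "u \<le> b" for t u
  proof -
    have "integral {a..t} g + integral {t..u} g = integral {a..u} g"
      by (rule Henstock_Kurzweil_Integration.integral_combine) (use that in \<open>auto intro: integrable_subinterval_real[OF gint]\<close>)
    thus ?thesis using xeq[of t] xeq[of u] that by (auto simp: algebra_simps)
  qed
  have gsub: "g integrable_on {t..u}" if "a \<le> t" "u \<le> b" for t u
    by (rule integrable_subinterval_real[OF gint]) (use that in auto)
  have wsub: "w integrable_on {t..u}" if "a \<le> t" "u \<le> b" for t u
    by (rule integrable_continuous_real, rule continuous_on_subset[OF wc]) (use that in auto)
  have xd: "norm (x u - x t) \<le> G * (u - t)" if "a \<le> t" "t \<le> u" "u \<le> b" for t u
    unfolding diff[OF that] by (rule integral_norm_const_bound) (use that gsub gb in auto)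
  have step: "\<phi> (t + h) - \<phi> t \<le> ((Lq + Cq) * G\<^sup>2) * h\<^sup>2"
    if th: "a \<le> t" "0 \<le> h" "t + h \<le> b" for t h
  proof -
    define \<Delta> where "\<Delta> = x (t + h) - x t"
    have \<Delta>eq: "\<Delta> = integral {t..t+h} g" unfolding \<Delta>_def using th by (intro diff) auto
    have \<Delta>n: "norm \<Delta> \<le> G * h" unfolding \<Delta>_def using xd[of t "t+h"] th by auto
    have lin1: "dV (x t) \<Delta> = integral {t..t+h} (\<lambda>s. dV (x t) (g s))"
      unfolding \<Delta>eq using integral_linear[OF gsub[of t "t+h"] lin[of "x t"]] th by (simp add: o_def)
    have int1: "(\<lambda>s. dV (x t) (g s)) integrable_on {t..t+h}"
      using integrable_linear[OF gsub[of t "t+h"] lin[of "x t"]] th by (simp add: o_def)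
    have pw: "dV (x t) (g s) \<le> - w s + Lq * G\<^sup>2 * h" if s: "s \<in> {t..t+h}" for s
    proof -
      have "dV (x t) (g s) - dV (x s) (g s) \<le> Lq * norm (x t - x s) * norm (g s)" by (rule dVL)
      also have "\<dots> \<le> Lq * (G * h) * G"
      proof (intro mult_mono mult_left_mono)
        have "norm (x t - x s) = norm (x s - x t)" by (simp add: norm_minus_commute)
        also have "\<dots> \<le> G * (s - t)" using xd[of t s] s th by auto
        also have "\<dots> \<le> G * h" using s G by (intro mult_left_mono) auto
        finally show "norm (x t - x s) \<le> G * h" .
      qed (use s th gb Lq G in auto)
      finally show ?thesis using pt[of s] s th by (simp add: power2_eq_square algebra_simps)
    qed
    have int2: "(\<lambda>s. - w s + Lq * G\<^sup>2 * h) integrable_on {t..t+h}"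
      by (rule integrable_add[OF integrable_neg[OF wsub[of t "t+h"]] integrable_const_ivl]) (use th in auto)
    have "dV (x t) \<Delta> \<le> integral {t..t+h} (\<lambda>s. - w s + Lq * G\<^sup>2 * h)"
      unfolding lin1 by (rule integral_le[OF int1 int2]) (use pw in auto)
    also have "\<dots> = - integral {t..t+h} w + Lq * G\<^sup>2 * h * h"
      using wsub[of t "t+h"] th by (subst integral_add) (auto simp: integral_neg intro: integrable_neg)
    finally have dVb: "dV (x t) \<Delta> \<le> - integral {t..t+h} w + Lq * G\<^sup>2 * h\<^sup>2" by (simp add: power2_eq_square)
    have "V (x (t+h)) \<le> V (x t) + dV (x t) \<Delta> + Cq * (norm \<Delta>)\<^sup>2"
      using Vq[of "x t" \<Delta>] by (simp add: \<Delta>_def)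
    moreover have "(norm \<Delta>)\<^sup>2 \<le> (G * h)\<^sup>2" using \<Delta>n by (intro power_mono) auto
    moreover have "integral {a..t+h} w = integral {a..t} w + integral {t..t+h} w"
      by (rule Henstock_Kurzweil_Integration.integral_combine[symmetric]) (use th in \<open>auto intro: wsub\<close>)
    ultimately show ?thesis using dVb Cq unfolding \<phi>_def
      by (simp add: power_mult_distrib algebra_simps) (smt (verit) mult_left_mono)
  qed
  have "\<phi> b \<le> \<phi> a"
    by (rule telescope_mono[OF ab _ step]) (use Lq Cq in auto)
  thus ?thesis unfolding \<phi>_def by simp
qed

lemma barbalat:
  fixes h u :: "real \<Rightarrow> real"
  assumes hint: "\<And>s t. 0 \<le> s \<Longrightarrow> s \<le> t \<Longrightarrow> u integrable_on {s..t} \<and> h t - h s = integral {s..t} u"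
    and uc: "uniformly_continuous_on {0..} u"
    and conv: "(h \<longlongrightarrow> L) at_top"
  shows "(u \<longlongrightarrow> 0) at_top"
proof (rule tendstoI)
  fix \<epsilon> :: real assume e: "\<epsilon> > 0"
  obtain \<delta> where d: "\<delta> > 0" and dd: "\<And>s t. s \<in> {0..} \<Longrightarrow> t \<in> {0..} \<Longrightarrow> dist t s < \<delta> \<Longrightarrow> dist (u t) (u s) < \<epsilon>/2"
    using uc e unfolding uniformly_continuous_on_def by (metis half_gt_zero)
  define d' where "d' = \<delta>/2"
  have d'0: "d' > 0" using d by (simp add: d'_def)
  have "\<forall>\<^sub>F t in at_top. dist (h t) L < \<epsilon> * d' / 8"
    using conv e d'0 by (intro tendstoD) auto
  then obtain T where T: "\<And>t. t \<ge> T \<Longrightarrow> dist (h t) L < \<epsilon> * d' / 8"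
    unfolding eventually_at_top_linorder by blast
  have "\<forall>t \<ge> max T 0. dist (u t) 0 < \<epsilon>"
  proof (intro allI impI)
    fix t assume t: "t \<ge> max T 0"
    have a1: "\<bar>h t - L\<bar> < \<epsilon> * d' / 8" using T[of t] t by (auto simp: dist_real_def)
    have a2: "\<bar>h (t+d') - L\<bar> < \<epsilon> * d' / 8" using T[of "t+d'"] t d'0 by (auto simp: dist_real_def)
    have hd: "\<bar>h (t + d') - h t\<bar> < \<epsilon> * d' / 4"
      using a1 a2 by arith
    have close: "\<bar>u r - u t\<bar> < \<epsilon>/2" if "r \<in> {t..t+d'}" for r
      using dd[of t r] that t d'0 d by (auto simp: dist_real_def d'_def)
    have ui: "u integrable_on {t..t+d'}" and heq: "h (t + d') - h t = integral {t..t+d'} u"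
      using hint[of t "t+d'"] t d'0 by auto
    show "dist (u t) 0 < \<epsilon>"
    proof (rule ccontr)
      assume "\<not> dist (u t) 0 < \<epsilon>"
      hence "u t \<ge> \<epsilon> \<or> u t \<le> - \<epsilon>" by (auto simp: dist_real_def)
      thus False
      proof
        assume ut: "u t \<ge> \<epsilon>"
        have pw: "\<epsilon>/2 \<le> u r" if "r \<in> {t..t+d'}" for r using close[OF that] ut by arith
        have "integral {t..t+d'} (\<lambda>_. \<epsilon>/2) \<le> integral {t..t+d'} u"
          by (rule integral_le[OF integrable_const_ivl ui]) (use pw in auto)
        hence "\<epsilon>/2 * d' \<le> h (t + d') - h t" using heq d'0 by (simp add: mult.commute)
        thus False using hd mult_pos_pos[OF e d'0] by arith
      next
        assume ut: "u t \<le> - \<epsilon>"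
        have pw: "u r \<le> - \<epsilon>/2" if "r \<in> {t..t+d'}" for r using close[OF that] ut by arith
        have "integral {t..t+d'} u \<le> integral {t..t+d'} (\<lambda>_. - \<epsilon>/2)"
          by (rule integral_le[OF ui integrable_const_ivl]) (use pw in auto)
        hence "h (t + d') - h t \<le> - \<epsilon>/2 * d'" using heq d'0 by (simp add: mult.commute)
        thus False using hd mult_pos_pos[OF e d'0] by arith
      qed
    qed
  qed
  thus "\<forall>\<^sub>F t in at_top. dist (u t) 0 < \<epsilon>"
    unfolding eventually_at_top_linorder by blast
qed

lemma diag_mult: "pos_diag A \<Longrightarrow> (A *v v) $ i = A $ i $ i * v $ i"
proof -
  assume A: "pos_diag A"
  have "(A *v v) $ i = (\<Sum>j\<in>UNIV. A $ i $ j * v $ j)" by (simp add: matrix_vector_mult_def)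
  also have "\<dots> = (\<Sum>j\<in>UNIV. if j = i then A $ i $ i * v $ i else 0)"
    by (rule sum.cong) (use A in \<open>auto simp: pos_diag_def\<close>)
  finally show ?thesis by simp
qed

lemma diag_transpose: "pos_diag A \<Longrightarrow> transpose A = A"
  by (simp add: pos_diag_def transpose_def vec_eq_iff) metis

lemma inner_diag: "pos_diag A \<Longrightarrow> inner u (A *v v) = (\<Sum>i\<in>UNIV. A $ i $ i * (u $ i * v $ i))"
  by (simp add: inner_vec_def diag_mult algebra_simps)

lemma inner_sym_diag: "pos_diag A \<Longrightarrow> inner u (A *v v) = inner (A *v u) v"
  by (simp add: inner_vec_def diag_mult algebra_simps)

lemma inner_transpose: "inner u (transpose A *v v) = inner ((A::real^_^_) *v u) v"
  by (metis dot_lmul_matrix inner_commute transpose_matrix_vector)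

lemma proj_scalar:
  fixes a a' Y Y' :: real
  assumes a: "a \<ge> 0" and a': "a' \<ge> 0" and p: "(if Y' > 0 \<or> a' > 0 then Y' else 0) = 0"
  shows "(a - a') * (if Y > 0 \<or> a > 0 then Y else 0) \<le> (a - a') * (Y - Y')"
proof -
  have Y': "Y' \<le> 0" and aY: "a' * Y' = 0" using p a' by (auto split: if_splits)
  show ?thesis
  proof (cases "Y > 0 \<or> a > 0")
    case True
    have "0 \<le> - a * Y'" using a Y' by (simp add: mult_nonneg_nonpos)
    moreover have "(a - a') * (Y - Y') = (a-a')*Y + (- a * Y') + a' * Y'" by (simp add: algebra_simps)
    ultimately show ?thesis using True aY by simp
  next
    case False
    hence a0: "a = 0" and Y: "Y \<le> 0" using a by auto
    have "0 \<le> - a' * Y" using a' Y by (simp add: mult_nonneg_nonpos)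
    moreover have "(a - a') * (Y - Y') = - a' * Y + a' * Y'" using a0 by (simp add: algebra_simps)
    ultimately show ?thesis using False aY by simp
  qed
qed

lemma proj_ineq:
  fixes y y' et et' :: "real^'a::finite"
  assumes "\<forall>i. et $ i \<ge> 0" "\<forall>i. et' $ i \<ge> 0" "proj_plus y' et' = 0"
  shows "inner (et - et') (proj_plus y et) \<le> inner (et - et') (y - y')"
proof -
  have "(et - et') $ i * proj_plus y et $ i \<le> (et - et') $ i * (y - y') $ i" for i
  proof -
    have p0: "(if y' $ i > 0 \<or> et' $ i > 0 then y' $ i else 0) = 0"
      using assms(3) by (auto simp: proj_plus_def vec_eq_iff)
    show ?thesis
      using proj_scalar[OF _ _ p0, of "et $ i" "y $ i"] assms(1,2) by (simp add: proj_plus_def)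
  qed
  thus ?thesis unfolding inner_vec_def inner_real_def by (intro sum_mono)
qed

lemma quad_id1: "(a::real) * (u - v)\<^sup>2 + b * (u * v) - (2 * a - b / 2) * (u\<^sup>2 + v\<^sup>2) = (b / 2 - a) * (u + v)\<^sup>2"
  by (simp add: power2_eq_square field_simps)

lemma quad_id2: "(a::real) * (u - v)\<^sup>2 + b * (u * v) - (b / 2) * (u\<^sup>2 + v\<^sup>2) = (a - b / 2) * (u - v)\<^sup>2"
  by (simp add: power2_eq_square field_simps)

lemma quad_ineq:
  fixes u v a b e :: real
  assumes e: "e = min (b/2) (2*a - b/2)"
  shows "a * (u - v)\<^sup>2 + b * (u * v) \<ge> e * (u\<^sup>2 + v\<^sup>2)"
proof (cases "b \<ge> 2*a")
  case True
  hence he: "e = 2*a - b/2" using e by (auto simp: min_def)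
  have "(b/2 - a) * (u + v)\<^sup>2 \<ge> 0" using True by (intro mult_nonneg_nonneg) auto
  thus ?thesis using quad_id1[of a u v b] unfolding he by linarith
next
  case False
  hence he: "e = b/2" using e by (auto simp: min_def)
  have "(a - b/2) * (u - v)\<^sup>2 \<ge> 0" using False by (intro mult_nonneg_nonneg) auto
  thus ?thesis using quad_id2[of a u v b] unfolding he by linarith
qed

lemma Iset_iff: "z \<in> Iset \<longleftrightarrow> (\<forall>i. snd (snd (snd (snd (snd z)))) $ i \<ge> 0)"
  by (cases z) (auto simp: Iset_def)

locale sysloc =
  fixes C :: "real^'e::finite^'n::finite" and B :: "real^'e^'e" and H :: "real^('e+'e)^'n"
    and F :: "real^('e+'e)"
    and D M Tq :: "real^'n^'n" and Teta :: "real^('e+'e)^('e+'e)"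
    and Tl \<rho> :: real and tau c cbar d :: "real^'n"
  assumes B: "pos_diag B" and D: "pos_diag D" and M: "pos_diag M" and Tq: "pos_diag Tq"
    and Teta: "pos_diag Teta" and Tl: "Tl > 0" and tau: "\<forall>j. tau $ j > 0"
    and c: "\<forall>j. c $ j > 0" and rho: "0 < \<rho>" "\<rho> < 4 * Min (range (\<lambda>j. c $ j))"
begin

definition piF :: "('n, 'e) state \<Rightarrow> real^'n" where
  "piF z = (\<chi> j. fst (snd (snd z))) - H *v snd (snd (snd (snd (snd z)))) - fst (snd (snd (snd z)))"

definition qF :: "('n, 'e) state \<Rightarrow> real^'n" where
  "qF z = (1 / \<rho>) *\<^sub>R (piF z - fst (snd (snd (snd (snd z))))) + fst z"

definition yF :: "('n, 'e) state \<Rightarrow> real^('e+'e)" where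
  "yF z = transpose H *v (qF z - d) - F"

definition fs :: "('n, 'e) state \<Rightarrow> ('n, 'e) state" where
  "fs z = (piF z - fst (snd (snd (snd (snd z)))),
           transpose C *v fst (snd (snd (snd z))),
           - (\<Sum>j\<in>UNIV. (qF z - d) $ j),
           qF z - d - D *v fst (snd (snd (snd z))) - C *v (B *v fst (snd z)),
           (\<chi> j. qF z $ j - (piF z $ j - cbar $ j) / c $ j),
           proj_plus (yF z) (snd (snd (snd (snd (snd z))))))"

definition Gam :: "('n, 'e) state \<Rightarrow> ('n, 'e) state" where
  "Gam w = (fst w, B *v fst (snd w), fst (snd (snd w)), fst (snd (snd (snd w))),
            fst (snd (snd (snd (snd w)))), snd (snd (snd (snd (snd w)))))"

definition eps :: "'n \<Rightarrow> real" where
  "eps j = min ((1 / c $ j) / 2) (2 * (1 / \<rho>) - (1 / c $ j) / 2)"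

definition Wp :: "('n, 'e) state \<Rightarrow> ('n, 'e) state \<Rightarrow> real" where
  "Wp p z = (\<Sum>j\<in>UNIV. eps j * (((piF z - piF p) $ j)\<^sup>2 + ((fst (snd (snd (snd (snd z)))) - fst (snd (snd (snd (snd p))))) $ j)\<^sup>2)
              + D $ j $ j * ((fst (snd (snd (snd z))) - fst (snd (snd (snd p)))) $ j)\<^sup>2)"

lemma eps_pos: "eps j > 0"
proof -
  have cj: "c $ j > 0" using c by auto
  have "Min (range (\<lambda>j. c $ j)) \<le> c $ j" by (rule Min_le) auto
  hence "\<rho> < 4 * c $ j" using rho by linarith
  hence "(1 / c $ j) / 2 < 2 * (1 / \<rho>)" using cj rho by (simp add: field_simps)
  thus ?thesis using cj unfolding eps_def by simp
qed

lemma Wp_nonneg: "Wp p z \<ge> 0"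
  unfolding Wp_def using eps_pos D by (intro sum_nonneg add_nonneg_nonneg mult_nonneg_nonneg) (auto simp: pos_diag_def less_imp_le)

lemma key_ineq:
  assumes fp: "fs p = 0" and pI: "p \<in> Iset" and zI: "z \<in> Iset"
  shows "inner (z - p) (Gam (fs z)) \<le> - Wp p z"
proof -
  obtain qh th l om al et where z: "z = (qh, th, l, om, al, et)" by (metis prod.collapse)
  obtain qh' th' l' om' al' et' where p: "p = (qh', th', l', om', al', et')" by (metis prod.collapse)
  define dqh where "dqh = qh - qh'"
  define dth where "dth = th - th'"
  define dl where "dl = l - l'"
  define dOm where "dOm = om - om'"
  define dal where "dal = al - al'"
  define dEt where "dEt = et - et'"
  define dpi where "dpi = piF z - piF p"
  define dq where "dq = qF z - qF p"
  have hpi: "dpi = (\<chi> j. dl) - H *v dEt - dOm"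
  proof -
    have a: "(\<chi> j. l - l') = (\<chi> j. l) - (\<chi> j. (l'::real))" by (simp add: vec_eq_iff)
    show ?thesis unfolding dpi_def dl_def dEt_def dOm_def a matrix_vector_mult_diff_distrib
      by (simp add: piF_def z p algebra_simps)
  qed
  have hq: "dq = (1 / \<rho>) *\<^sub>R (dpi - dal) + dqh"
    by (simp add: dq_def qF_def z p dpi_def dal_def dqh_def algebra_simps)
  have f1: "piF p = al'" and f2: "transpose C *v om' = 0" and f3: "(\<Sum>j\<in>UNIV. (qF p - d) $ j) = 0"
    and f4: "qF p - d - D *v om' - C *v (B *v th') = 0"
    and f5: "\<And>j. qF p $ j = (piF p $ j - cbar $ j) / c $ j"
    and f6: "proj_plus (yF p) et' = 0"
    using fp c by (auto simp: fs_def p zero_prod_def vec_eq_iff simp del: transpose_matrix_vector)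
  have split: "inner (z - p) (Gam (fs z)) =
      inner dqh (piF z - al) + inner dth (B *v (transpose C *v om)) + dl * (- (\<Sum>j\<in>UNIV. (qF z - d) $ j))
      + inner dOm (qF z - d - D *v om - C *v (B *v th))
      + inner dal (\<chi> j. qF z $ j - (piF z $ j - cbar $ j) / c $ j)
      + inner dEt (proj_plus (yF z) et)"
    by (simp add: z p Gam_def fs_def dqh_def dth_def dl_def dOm_def dal_def dEt_def del: transpose_matrix_vector)
  have T1: "inner dqh (piF z - al) = inner dqh (dpi - dal)"
    by (simp add: dpi_def dal_def f1)
  have T2: "inner dth (B *v (transpose C *v om)) = inner (C *v (B *v dth)) dOm"
  proof -
    have "transpose C *v om = transpose C *v dOm"
      using f2 by (simp add: dOm_def matrix_vector_mult_diff_distrib del: transpose_matrix_vector)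
    thus ?thesis by (simp add: inner_sym_diag[OF B] inner_transpose inner_commute del: transpose_matrix_vector)
  qed
  have T3: "dl * (- (\<Sum>j\<in>UNIV. (qF z - d) $ j)) = - inner (\<chi> j. dl) dq"
  proof -
    have "(\<Sum>j\<in>UNIV. (qF z - d) $ j) = (\<Sum>j\<in>UNIV. (qF z - d) $ j) - (\<Sum>j\<in>UNIV. (qF p - d) $ j)"
      using f3 by simp
    also have "\<dots> = (\<Sum>j\<in>UNIV. dq $ j)" by (simp add: dq_def sum_subtractf[symmetric])
    finally show ?thesis by (simp add: inner_vec_def sum_distrib_left)
  qed
  have T4: "inner dOm (qF z - d - D *v om - C *v (B *v th)) = inner dOm (dq - D *v dOm - C *v (B *v dth))"
  proof -
    have "qF z - d - D *v om - C *v (B *v th) = (qF z - d - D *v om - C *v (B *v th)) - (qF p - d - D *v om' - C *v (B *v th'))"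
      using f4 by simp
    also have "\<dots> = dq - D *v dOm - C *v (B *v dth)"
      by (simp add: dq_def dOm_def dth_def matrix_vector_mult_diff_distrib)
    finally show ?thesis by simp
  qed
  have T5: "inner dal (\<chi> j. qF z $ j - (piF z $ j - cbar $ j) / c $ j) = inner dal dq - (\<Sum>j\<in>UNIV. dal $ j * dpi $ j / c $ j)"
  proof -
    have "(\<chi> j. qF z $ j - (piF z $ j - cbar $ j) / c $ j) = dq - (\<chi> j. dpi $ j / c $ j)"
      using f5 c by (simp add: vec_eq_iff dq_def dpi_def diff_divide_distrib)
    thus ?thesis by (simp add: inner_diff_right inner_vec_def right_diff_distrib sum_subtractf)
  qed
  have T6: "inner dEt (proj_plus (yF z) et) \<le> inner (H *v dEt) dq"
  proof -
    have "inner dEt (proj_plus (yF z) et) \<le> inner dEt (yF z - yF p)"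
      unfolding dEt_def by (rule proj_ineq) (use zI pI f6 in \<open>auto simp: z p Iset_iff\<close>)
    also have "yF z - yF p = transpose H *v dq"
      by (simp add: yF_def dq_def matrix_vector_mult_diff_distrib del: transpose_matrix_vector)
    finally show ?thesis by (simp add: inner_transpose del: transpose_matrix_vector)
  qed
  define w where "w = dpi - dal"
  have comb: "inner dqh (dpi - dal) + inner (C *v (B *v dth)) dOm - inner (\<chi> j. dl) dq
      + inner dOm (dq - D *v dOm - C *v (B *v dth)) + (inner dal dq - (\<Sum>j\<in>UNIV. dal $ j * dpi $ j / c $ j))
      + inner (H *v dEt) dq
      = - (1 / \<rho>) * inner w w - inner dOm (D *v dOm) - (\<Sum>j\<in>UNIV. dal $ j * dpi $ j / c $ j)"
  proof -
    have e1: "inner (\<chi> j. dl) dq - inner (H *v dEt) dq - inner dOm dq = inner dpi dq"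
      by (simp add: hpi inner_diff_left)
    have e2: "inner w dq = (1 / \<rho>) * inner w w + inner w dqh"
      by (simp add: hq w_def inner_add_right)
    have e3: "inner dqh (dpi - dal) = inner w dqh" by (simp add: w_def inner_commute)
    have e4: "inner dpi dq - inner dal dq = inner w dq" by (simp add: w_def inner_diff_left)
    show ?thesis using e1 e2 e3 e4
      by (simp add: inner_diff_right inner_commute[of dOm] algebra_simps)
  qed
  have final: "- (1 / \<rho>) * inner w w - inner dOm (D *v dOm) - (\<Sum>j\<in>UNIV. dal $ j * dpi $ j / c $ j) \<le> - Wp p z"
  proof -
    have "Wp p z = (\<Sum>j\<in>UNIV. eps j * ((dpi $ j)\<^sup>2 + (dal $ j)\<^sup>2) + D $ j $ j * (dOm $ j)\<^sup>2)"
      by (simp add: Wp_def z p dpi_def dal_def dOm_def)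
    also have "\<dots> \<le> (\<Sum>j\<in>UNIV. (1 / \<rho>) * (dpi $ j - dal $ j)\<^sup>2 + (1 / c $ j) * (dpi $ j * dal $ j) + D $ j $ j * (dOm $ j)\<^sup>2)"
      by (intro sum_mono add_right_mono quad_ineq) (simp add: eps_def)
    also have "\<dots> = (\<Sum>j\<in>UNIV. (1 / \<rho>) * (w $ j * w $ j) + D $ j $ j * (dOm $ j * dOm $ j) + dal $ j * dpi $ j / c $ j)"
      by (intro sum.cong) (simp_all add: w_def power2_eq_square algebra_simps)
    also have "\<dots> = (1 / \<rho>) * (\<Sum>j\<in>UNIV. w $ j * w $ j) + (\<Sum>j\<in>UNIV. D $ j $ j * (dOm $ j * dOm $ j)) + (\<Sum>j\<in>UNIV. dal $ j * dpi $ j / c $ j)"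
      by (simp add: sum.distrib sum_distrib_left)
    also have "\<dots> = (1 / \<rho>) * inner w w + inner dOm (D *v dOm) + (\<Sum>j\<in>UNIV. dal $ j * dpi $ j / c $ j)"
      by (simp add: diag_mult[OF D] inner_vec_def algebra_simps)
    finally show ?thesis by simp
  qed
  show ?thesis
    using split T1 T2 T3 T4 T5 T6 comb final by linarith
qed

end

lemma continuous_on_mv[continuous_intros]:
  "continuous_on S f \<Longrightarrow> continuous_on S (\<lambda>x. (A::real^'m::finite^'k::finite) *v f x)"
  using bounded_linear.continuous_on[OF matrix_vector_mul_bounded_linear] by blast

lemma continuous_on_vnth[continuous_intros]:
  "continuous_on S f \<Longrightarrow> continuous_on S (\<lambda>x. (f x :: real^'m::finite) $ i)"
  using bounded_linear.continuous_on[OF bounded_linear_vec_nth] by blast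


lemma diag_pos: "pos_diag A \<Longrightarrow> A $ i $ i > 0" by (simp add: pos_diag_def)

lemma diag_nz: "pos_diag A \<Longrightarrow> A $ i $ i \<noteq> 0" by (simp add: pos_diag_def less_imp_neq[symmetric])

lemma Min_diag_pos: "pos_diag A \<Longrightarrow> Min (range (\<lambda>i. (A::real^'a::finite^'a) $ i $ i)) > 0"
  by (subst Min_gr_iff) (auto simp: pos_diag_def)

lemma diag_lb: "pos_diag A \<Longrightarrow> inner v (A *v v) \<ge> Min (range (\<lambda>i. (A::real^'a::finite^'a) $ i $ i)) * inner v v"
proof -
  assume A: "pos_diag A"
  have "Min (range (\<lambda>i. A $ i $ i)) * inner v v = (\<Sum>i\<in>UNIV. Min (range (\<lambda>i. A $ i $ i)) * (v $ i * v $ i))"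
    by (simp add: inner_vec_def sum_distrib_left)
  also have "\<dots> \<le> (\<Sum>i\<in>UNIV. A $ i $ i * (v $ i * v $ i))"
    by (intro sum_mono mult_right_mono) auto
  also have "\<dots> = inner v (A *v v)" by (simp add: inner_diag[OF A])
  finally show ?thesis .
qed

lemma vec_lb: "(\<forall>j. t $ j > 0) \<Longrightarrow> inner v (\<chi> j. t $ j * v $ j) \<ge> Min (range (\<lambda>j. (t::real^'a::finite) $ j)) * inner v v"
proof -
  have "Min (range (\<lambda>i. t $ i)) * inner v v = (\<Sum>i\<in>UNIV. Min (range (\<lambda>i. t $ i)) * (v $ i * v $ i))"
    by (simp add: inner_vec_def sum_distrib_left)
  also have "\<dots> \<le> (\<Sum>i\<in>UNIV. t $ i * (v $ i * v $ i))"
    by (intro sum_mono mult_right_mono) auto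
  also have "\<dots> = inner v (\<chi> j. t $ j * v $ j)" by (simp add: inner_vec_def algebra_simps)
  finally show ?thesis .
qed

lemma pair_norm_mono: "norm b \<le> norm b' \<Longrightarrow> norm (a, b) \<le> norm (a, b')"
  unfolding norm_Pair by (intro real_sqrt_le_mono add_left_mono power_mono) auto

lemma proj_norm: "norm (proj_plus y u) \<le> norm y"
  by (rule norm_le_componentwise_cart) (simp add: proj_plus_def)

context sysloc begin

lemma tau_nz: "tau $ i \<noteq> 0" using tau by (metis less_irrefl)

definition Kinv :: "('n, 'e) state \<Rightarrow> ('n, 'e) state" where
  "Kinv w = ((\<chi> i. fst w $ i / Tq $ i $ i), fst (snd w), fst (snd (snd w)) / Tl,
            (\<chi> i. fst (snd (snd (snd w))) $ i / M $ i $ i),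
            (\<chi> i. fst (snd (snd (snd (snd w)))) $ i / tau $ i),
            (\<chi> i. snd (snd (snd (snd (snd w)))) $ i / Teta $ i $ i))"

definition P :: "('n, 'e) state \<Rightarrow> ('n, 'e) state" where
  "P w = (Tq *v fst w, B *v fst (snd w), Tl * fst (snd (snd w)), M *v fst (snd (snd (snd w))),
          (\<chi> j. tau $ j * fst (snd (snd (snd (snd w)))) $ j), Teta *v snd (snd (snd (snd (snd w)))))"

lemma Kinv_K: "Kinv (Kop Tq Tl M tau Teta z) = z"
proof -
  obtain a1 a2 a3 a4 a5 a6 where z: "z = (a1, a2, a3, a4, a5, a6)" by (metis prod.collapse)
  have e1: "(\<chi> i. (Tq *v a1) $ i / Tq $ i $ i) = a1"
    by (simp add: vec_eq_iff diag_mult[OF Tq] diag_nz[OF Tq])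
  have e4: "(\<chi> i. (M *v a4) $ i / M $ i $ i) = a4"
    by (simp add: vec_eq_iff diag_mult[OF M] diag_nz[OF M])
  have e6: "(\<chi> i. (Teta *v a6) $ i / Teta $ i $ i) = a6"
    by (simp add: vec_eq_iff diag_mult[OF Teta] diag_nz[OF Teta])
  have e5: "(\<chi> i. (\<chi> j. tau $ j * a5 $ j) $ i / tau $ i) = a5"
    by (simp add: vec_eq_iff tau_nz)
  show ?thesis using Tl unfolding z Kop_def Kinv_def by (simp add: e1 e4 e5 e6 tau_nz)
qed

lemma Kinv_lin: "bounded_linear Kinv"
proof -
  have "linear Kinv"
    by (rule linearI) (simp_all add: Kinv_def vec_eq_iff add_divide_distrib)
  thus ?thesis by (simp add: linear_conv_bounded_linear)
qed

lemma P_lin: "bounded_linear P"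
proof -
  have "linear P"
    by (rule linearI) (simp_all add: P_def vec_eq_iff matrix_vector_right_distrib matrix_vector_mult_scaleR algebra_simps)
  thus ?thesis by (simp add: linear_conv_bounded_linear)
qed

lemma P_Kinv: "P (Kinv w) = Gam w"
proof -
  obtain a1 a2 a3 a4 a5 a6 where w: "w = (a1, a2, a3, a4, a5, a6)" by (metis prod.collapse)
  have e1: "Tq *v (\<chi> i. a1 $ i / Tq $ i $ i) = a1"
    by (simp add: vec_eq_iff diag_mult[OF Tq] diag_nz[OF Tq])
  have e4: "M *v (\<chi> i. a4 $ i / M $ i $ i) = a4"
    by (simp add: vec_eq_iff diag_mult[OF M] diag_nz[OF M])
  have e6: "Teta *v (\<chi> i. a6 $ i / Teta $ i $ i) = a6"
    by (simp add: vec_eq_iff diag_mult[OF Teta] diag_nz[OF Teta])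
  have e5: "(\<chi> j. tau $ j * (\<chi> i. a5 $ i / tau $ i) $ j) = a5"
    by (simp add: vec_eq_iff tau_nz)
  show ?thesis using Tl unfolding w P_def Kinv_def Gam_def by (simp add: e1 e4 e5 e6 tau_nz)
qed

lemma P_sym: "inner u (P v) = inner (P u) v"
proof -
  obtain a1 a2 a3 a4 a5 a6 where u: "u = (a1, a2, a3, a4, a5, a6)" by (metis prod.collapse)
  obtain b1 b2 b3 b4 b5 b6 where v: "v = (b1, b2, b3, b4, b5, b6)" by (metis prod.collapse)
  have "inner a5 (\<chi> j. tau $ j * b5 $ j) = inner (\<chi> j. tau $ j * a5 $ j) b5"
    by (simp add: inner_vec_def algebra_simps)
  thus ?thesis
    by (simp add: u v P_def inner_sym_diag[OF Tq] inner_sym_diag[OF B] inner_sym_diag[OF M] inner_sym_diag[OF Teta])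
qed

definition mP :: real where
  "mP = min (Min (range (\<lambda>i. Tq $ i $ i))) (min (Min (range (\<lambda>i. B $ i $ i))) (min Tl
        (min (Min (range (\<lambda>i. M $ i $ i))) (min (Min (range (\<lambda>i. tau $ i))) (Min (range (\<lambda>i. Teta $ i $ i)))))))"

lemma mP_pos: "mP > 0"
proof -
  have t: "Min (range (\<lambda>i. tau $ i)) > 0" using tau by (subst Min_gr_iff) auto
  have mp: "0 < a \<Longrightarrow> 0 < b \<Longrightarrow> 0 < min a (b::real)" for a b by (simp add: min_def)
  show ?thesis unfolding mP_def
    by (intro mp t Min_diag_pos[OF Tq] Min_diag_pos[OF B] Min_diag_pos[OF M] Min_diag_pos[OF Teta] Tl)
qed

lemma mP_le:
  "mP \<le> Min (range (\<lambda>i. Tq $ i $ i))" "mP \<le> Min (range (\<lambda>i. B $ i $ i))" "mP \<le> Tl"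
  "mP \<le> Min (range (\<lambda>i. M $ i $ i))" "mP \<le> Min (range (\<lambda>i. tau $ i))" "mP \<le> Min (range (\<lambda>i. Teta $ i $ i))"
  unfolding mP_def
  by (rule min.cobounded1 min.coboundedI2[OF min.cobounded1] min.coboundedI2[OF min.coboundedI2[OF min.cobounded1]]
      min.coboundedI2[OF min.coboundedI2[OF min.coboundedI2[OF min.cobounded1]]]
      min.coboundedI2[OF min.coboundedI2[OF min.coboundedI2[OF min.coboundedI2[OF min.cobounded1]]]]
      min.coboundedI2[OF min.coboundedI2[OF min.coboundedI2[OF min.coboundedI2[OF min.cobounded2]]]])+

lemma P_pos: "inner u (P u) \<ge> mP * (norm u)\<^sup>2"
proof -
  obtain a1 a2 a3 a4 a5 a6 where u: "u = (a1, a2, a3, a4, a5, a6)" by (metis prod.collapse)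
  have n: "(norm u)\<^sup>2 = inner a1 a1 + inner a2 a2 + inner a3 a3 + inner a4 a4 + inner a5 a5 + inner a6 a6"
    by (simp add: u power2_norm_eq_inner)
  have i: "inner u (P u) = inner a1 (Tq *v a1) + inner a2 (B *v a2) + inner a3 (Tl * a3) + inner a4 (M *v a4)
      + inner a5 (\<chi> j. tau $ j * a5 $ j) + inner a6 (Teta *v a6)"
    by (simp add: u P_def)
  have l1: "inner a1 (Tq *v a1) \<ge> mP * inner a1 a1"
    using diag_lb[OF Tq, of a1] mult_right_mono[OF mP_le(1) inner_ge_zero[of a1]] by linarith
  have l2: "inner a2 (B *v a2) \<ge> mP * inner a2 a2"
    using diag_lb[OF B, of a2] mult_right_mono[OF mP_le(2) inner_ge_zero[of a2]] by linarith
  have l3: "inner a3 (Tl * a3) \<ge> mP * inner a3 a3"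
    using mult_right_mono[OF mP_le(3) inner_ge_zero[of a3]] by (simp add: inner_real_def algebra_simps)
  have l4: "inner a4 (M *v a4) \<ge> mP * inner a4 a4"
    using diag_lb[OF M, of a4] mult_right_mono[OF mP_le(4) inner_ge_zero[of a4]] by linarith
  have l5: "inner a5 (\<chi> j. tau $ j * a5 $ j) \<ge> mP * inner a5 a5"
    using vec_lb[OF tau, of a5] mult_right_mono[OF mP_le(5) inner_ge_zero[of a5]] by linarith
  have l6: "inner a6 (Teta *v a6) \<ge> mP * inner a6 a6"
    using diag_lb[OF Teta, of a6] mult_right_mono[OF mP_le(6) inner_ge_zero[of a6]] by linarith
  show ?thesis unfolding n i using l1 l2 l3 l4 l5 l6 by (simp add: algebra_simps)
qed

end

lemma stay_nonneg:
  fixes u v :: "real \<Rightarrow> real"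
  assumes t1: "0 \<le> t1" and cont: "continuous_on {0..t1} u"
    and int: "\<And>s t. 0 \<le> s \<Longrightarrow> s \<le> t \<Longrightarrow> t \<le> t1 \<Longrightarrow> v integrable_on {s..t} \<and> u t - u s = integral {s..t} v"
    and pos: "\<And>r. r \<in> {0..t1} \<Longrightarrow> u r \<le> 0 \<Longrightarrow> v r \<ge> 0"
    and u0: "u 0 \<ge> 0"
  shows "u t1 \<ge> 0"
proof (rule ccontr)
  assume neg: "\<not> u t1 \<ge> 0"
  define S where "S = {0..t1} \<inter> u -` {0..}"
  have cS: "closed S" unfolding S_def
    by (rule continuous_closed_preimage[OF cont]) auto
  have 0: "0 \<in> S" using t1 u0 by (simp add: S_def)
  have bS: "bdd_above S" unfolding S_def by (rule bdd_aboveI[of _ t1]) auto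
  define s0 where "s0 = Sup S"
  have s0S: "s0 \<in> S" unfolding s0_def using closed_contains_Sup[OF _ bS cS] 0 by auto
  hence s0: "0 \<le> s0" "s0 \<le> t1" "u s0 \<ge> 0" by (auto simp: S_def)
  have after: "u r < 0" if "s0 < r" "r \<le> t1" for r
  proof (rule ccontr)
    assume "\<not> u r < 0"
    hence "r \<in> S" using that s0 by (auto simp: S_def)
    hence "r \<le> s0" unfolding s0_def using bS by (rule cSup_upper)
    thus False using that by simp
  qed
  have s0lt: "s0 < t1" using s0 neg by (cases "s0 = t1") auto
  have us0: "u s0 \<le> 0"
  proof (rule ccontr)
    assume "\<not> u s0 \<le> 0"
    hence pos0: "u s0 > 0" by simp
    obtain d where d: "d > 0" and dd: "\<And>r. r \<in> {0..t1} \<Longrightarrow> dist r s0 < d \<Longrightarrow> dist (u r) (u s0) < u s0"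
      using cont s0 pos0 unfolding continuous_on_iff by (metis atLeastAtMost_iff)
    define r where "r = min (s0 + d/2) t1"
    have r: "s0 < r" "r \<le> t1" "r \<in> {0..t1}" "dist r s0 < d" using d s0lt s0 by (auto simp: r_def dist_real_def)
    have "u r > 0" using dd[OF r(3) r(4)] by (auto simp: dist_real_def)
    thus False using after[OF r(1) r(2)] by simp
  qed
  have vpos: "v r \<ge> 0" if "r \<in> {s0..t1}" for r
  proof (cases "r = s0")
    case True thus ?thesis using pos[of r] us0 s0 by auto
  next
    case False thus ?thesis using pos[of r] after[of r] that s0 by auto
  qed
  have "v integrable_on {s0..t1} \<and> u t1 - u s0 = integral {s0..t1} v" using int[of s0 t1] s0 s0lt by auto
  moreover have "integral {s0..t1} v \<ge> 0" using calculation vpos by (intro integral_nonneg) auto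
  ultimately have "u t1 \<ge> u s0" by simp
  thus False using neg s0 by simp
qed

context sysloc begin

definition V :: "('n, 'e) state \<Rightarrow> ('n, 'e) state \<Rightarrow> real" where
  "V p z = (1/2) * inner (z - p) (P (z - p))"

definition nP :: real where "nP = onorm P"

lemma nP: "norm (P v) \<le> nP * norm v" "nP \<ge> 0"
  unfolding nP_def using onorm[OF P_lin] onorm_pos_le[OF P_lin] by auto

lemma P_add: "P (u + v) = P u + P v" using P_lin by (simp add: linear_simps)

lemma P_diff: "P (u - v) = P u - P v" using P_lin by (simp add: linear_simps)

lemma V_expand: "V p (z + \<Delta>) = V p z + inner (z - p) (P \<Delta>) + (1/2) * inner \<Delta> (P \<Delta>)"
proof -
  have e: "z + \<Delta> - p = (z - p) + \<Delta>" by simp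
  have "inner (z + \<Delta> - p) (P (z + \<Delta> - p)) = inner (z - p) (P (z - p)) + inner (z - p) (P \<Delta>) + inner \<Delta> (P (z - p)) + inner \<Delta> (P \<Delta>)"
    unfolding e P_add inner_add_left inner_add_right by simp
  moreover have "inner \<Delta> (P (z - p)) = inner (z - p) (P \<Delta>)" using P_sym[of \<Delta> "z - p"] inner_commute[of "P \<Delta>" "z - p"] by simp
  ultimately show ?thesis unfolding V_def by (simp add: algebra_simps)
qed

lemma quad_le: "inner \<Delta> (P \<Delta>) \<le> nP * (norm \<Delta>)\<^sup>2"
proof -
  have "inner \<Delta> (P \<Delta>) \<le> norm \<Delta> * norm (P \<Delta>)" by (rule norm_cauchy_schwarz)
  also have "\<dots> \<le> norm \<Delta> * (nP * norm \<Delta>)" by (intro mult_left_mono nP) auto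
  finally show ?thesis by (simp add: power2_eq_square algebra_simps)
qed

lemma V_ub: "V p z \<le> nP / 2 * (norm (z - p))\<^sup>2"
  using quad_le[of "z - p"] unfolding V_def by simp

lemma V_lb: "V p z \<ge> mP / 2 * (norm (z - p))\<^sup>2"
  using P_pos[of "z - p"] unfolding V_def by simp

lemma cont_P: "continuous_on S f \<Longrightarrow> continuous_on S (\<lambda>x. P (f x))"
  using bounded_linear.continuous_on[OF P_lin] by blast

lemma cont_V: "continuous_on S (V p)"
  unfolding V_def by (intro continuous_intros cont_P)

end

context sysloc begin

definition gtr :: "(real \<Rightarrow> ('n, 'e) state) \<Rightarrow> real \<Rightarrow> ('n, 'e) state" where
  "gtr x s = Kinv (fs (x s))"

lemma gtr_eq: "gtr x = (\<lambda>s. Kinv (fs (x s)))" by (rule ext) (simp add: gtr_def)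

lemma sol_int0:
  assumes sol: "cara_sol (Kop Tq Tl M tau Teta) fs x" and t: "0 \<le> t"
  shows "gtr x integrable_on {0..t} \<and> x t = x 0 + integral {0..t} (gtr x)"
proof -
  have fi: "(\<lambda>s. fs (x s)) absolutely_integrable_on {0..t}"
    and eq: "Kop Tq Tl M tau Teta (x t) - Kop Tq Tl M tau Teta (x 0) = integral {0..t} (\<lambda>s. fs (x s))"
    using sol t unfolding cara_sol_def by auto
  have int: "(\<lambda>s. fs (x s)) integrable_on {0..t}" using fi unfolding absolutely_integrable_on_def by blast
  have gi: "gtr x integrable_on {0..t}" using integrable_linear[OF int Kinv_lin] by (simp add: o_def gtr_eq)
  have "integral {0..t} (gtr x) = Kinv (integral {0..t} (\<lambda>s. fs (x s)))"
    using integral_linear[OF int Kinv_lin] by (simp add: o_def gtr_eq)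
  also have "\<dots> = Kinv (Kop Tq Tl M tau Teta (x t)) - Kinv (Kop Tq Tl M tau Teta (x 0))"
    unfolding eq[symmetric] by (rule linear_diff[OF bounded_linear.linear[OF Kinv_lin]])
  also have "\<dots> = x t - x 0" by (simp add: Kinv_K)
  finally show ?thesis using gi by simp
qed

lemma sol_diff:
  assumes sol: "cara_sol (Kop Tq Tl M tau Teta) fs x" and st: "0 \<le> s" "s \<le> t"
  shows "gtr x integrable_on {s..t} \<and> x t - x s = integral {s..t} (gtr x)"
proof -
  have gi: "gtr x integrable_on {0..t}" and xt: "x t = x 0 + integral {0..t} (gtr x)"
    using sol_int0[OF sol, of t] st by simp_all
  have xs: "x s = x 0 + integral {0..s} (gtr x)" using sol_int0[OF sol, of s] st by blast
  have gs: "gtr x integrable_on {s..t}" by (rule integrable_subinterval_real[OF gi]) (use st in auto)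
  have comb: "integral {0..s} (gtr x) + integral {s..t} (gtr x) = integral {0..t} (gtr x)"
    by (rule Henstock_Kurzweil_Integration.integral_combine) (use st gi in auto)
  have "x t - x s = integral {0..t} (gtr x) - integral {0..s} (gtr x)"
    unfolding xt xs by simp
  also have "\<dots> = integral {s..t} (gtr x)" unfolding comb[symmetric] by simp
  finally show ?thesis using gs by simp
qed

lemma sol_comp:
  assumes sol: "cara_sol (Kop Tq Tl M tau Teta) fs x" and st: "0 \<le> s" "s \<le> t" and l: "bounded_linear l"
  shows "(\<lambda>r. l (gtr x r)) integrable_on {s..t} \<and> l (x t) - l (x s) = integral {s..t} (\<lambda>r. l (gtr x r))"
proof -
  have gi: "gtr x integrable_on {s..t}" and d: "x t - x s = integral {s..t} (gtr x)"
    using sol_diff[OF sol st] by auto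
  have "l (x t) - l (x s) = l (x t - x s)" using linear_diff[OF bounded_linear.linear[OF l]] by simp
  also have "\<dots> = integral {s..t} (\<lambda>r. l (gtr x r))" unfolding d using integral_linear[OF gi l] by (simp add: o_def)
  finally show ?thesis using integrable_linear[OF gi l] by (simp add: o_def)
qed

lemma sol_cont:
  assumes sol: "cara_sol (Kop Tq Tl M tau Teta) fs x" and b: "0 \<le> b"
  shows "continuous_on {0..b} x"
proof -
  have gi: "gtr x integrable_on {0..b}" using sol_int0[OF sol b] by auto
  have "continuous_on {0..b} (\<lambda>t. x 0 + integral {0..t} (gtr x))"
    by (intro continuous_intros indefinite_integral_continuous_1[OF gi])
  moreover have "\<And>t. t \<in> {0..b} \<Longrightarrow> x 0 + integral {0..t} (gtr x) = x t"
    using sol_int0[OF sol] by (metis atLeastAtMost_iff)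
  ultimately show ?thesis by (rule continuous_on_eq)
qed

lemma lin_eta: "bounded_linear (\<lambda>w::('n, 'e) state. snd (snd (snd (snd (snd w)))) $ e)"
proof -
  have "linear (\<lambda>w::('n, 'e) state. snd (snd (snd (snd (snd w)))) $ e)" by (rule linearI) simp_all
  thus ?thesis by (simp add: linear_conv_bounded_linear)
qed

lemma gtr_eta: "snd (snd (snd (snd (snd (gtr x r))))) $ e = proj_plus (yF (x r)) (snd (snd (snd (snd (snd (x r)))))) $ e / Teta $ e $ e"
  by (simp add: gtr_def Kinv_def fs_def)

lemma sol_Iset:
  assumes sol: "cara_sol (Kop Tq Tl M tau Teta) fs x" and x0: "x 0 \<in> Iset" and t: "0 \<le> t"
  shows "x t \<in> Iset"
  unfolding Iset_iff
proof
  fix e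
  show "snd (snd (snd (snd (snd (x t))))) $ e \<ge> 0"
  proof (rule stay_nonneg[OF t, where v = "\<lambda>r. snd (snd (snd (snd (snd (gtr x r))))) $ e"])
    show "continuous_on {0..t} (\<lambda>r. snd (snd (snd (snd (snd (x r))))) $ e)"
      by (intro continuous_intros sol_cont[OF sol t])
    show "(\<lambda>r. snd (snd (snd (snd (snd (gtr x r))))) $ e) integrable_on {s..t'} \<and>
          snd (snd (snd (snd (snd (x t'))))) $ e - snd (snd (snd (snd (snd (x s))))) $ e =
          integral {s..t'} (\<lambda>r. snd (snd (snd (snd (snd (gtr x r))))) $ e)"
      if "0 \<le> s" "s \<le> t'" "t' \<le> t" for s t'
      using sol_comp[OF sol that(1,2) lin_eta] .
    show "snd (snd (snd (snd (snd (gtr x r))))) $ e \<ge> 0"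
      if "r \<in> {0..t}" "snd (snd (snd (snd (snd (x r))))) $ e \<le> 0" for r
    proof -
      have "proj_plus (yF (x r)) (snd (snd (snd (snd (snd (x r)))))) $ e \<ge> 0"
        using that(2) unfolding proj_plus_def by simp
      thus ?thesis unfolding gtr_eta by (rule divide_nonneg_pos[OF _ diag_pos[OF Teta]])
    qed
    show "snd (snd (snd (snd (snd (x 0))))) $ e \<ge> 0" using x0 by (simp add: Iset_iff)
  qed
qed

end

context sysloc begin

lemma c_nz: "c $ j \<noteq> 0" using c by (metis less_irrefl)

lemma cont_piF: "continuous_on S piF"
  unfolding piF_def by (intro continuous_intros)

lemma cont_qF: "continuous_on S qF"
  unfolding qF_def by (intro continuous_intros cont_piF)

lemma cont_yF: "continuous_on S yF"
  unfolding yF_def by (intro continuous_intros cont_qF)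

lemma cont_Wp: "continuous_on S (Wp p)"
  unfolding Wp_def by (intro continuous_intros cont_piF)

definition fhat :: "('n, 'e) state \<Rightarrow> ('n, 'e) state" where
  "fhat z = (piF z - fst (snd (snd (snd (snd z)))),
           transpose C *v fst (snd (snd (snd z))),
           - (\<Sum>j\<in>UNIV. (qF z - d) $ j),
           qF z - d - D *v fst (snd (snd (snd z))) - C *v (B *v fst (snd z)),
           (\<chi> j. qF z $ j - (piF z $ j - cbar $ j) / c $ j),
           yF z)"

lemma fs_le_fhat: "norm (fs z) \<le> norm (fhat z)"
  unfolding fs_def fhat_def
  by (intro pair_norm_mono proj_norm)

lemma cont_fhat: "continuous_on S fhat"
  unfolding fhat_def by (intro continuous_intros cont_piF cont_qF cont_yF) (auto simp: c_nz)

lemma sol_gbound: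
  assumes sol: "cara_sol (Kop Tq Tl M tau Teta) fs x" and b: "0 \<le> b"
  obtains G where "G \<ge> 0" "\<And>s. s \<in> {0..b} \<Longrightarrow> norm (gtr x s) \<le> G"
proof -
  have "compact ((\<lambda>s. fhat (x s)) ` {0..b})"
    by (rule compact_continuous_image[OF continuous_on_compose2[OF cont_fhat sol_cont[OF sol b]]]) auto
  then obtain a where a: "\<And>y. y \<in> (\<lambda>s. fhat (x s)) ` {0..b} \<Longrightarrow> norm y \<le> a"
    using compact_imp_bounded bounded_iff by metis
  define G where "G = onorm Kinv * max a 0"
  have "norm (gtr x s) \<le> G" if s: "s \<in> {0..b}" for s
  proof -
    have "norm (gtr x s) \<le> onorm Kinv * norm (fs (x s))" unfolding gtr_def by (rule onorm[OF Kinv_lin])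
    also have "\<dots> \<le> onorm Kinv * max a 0"
    proof (rule mult_left_mono)
      have "norm (fs (x s)) \<le> norm (fhat (x s))" by (rule fs_le_fhat)
      also have "\<dots> \<le> a" using a s by blast
      finally show "norm (fs (x s)) \<le> max a 0" by simp
    qed (rule onorm_pos_le[OF Kinv_lin])
    finally show ?thesis by (simp add: G_def)
  qed
  moreover have "G \<ge> 0" unfolding G_def using onorm_pos_le[OF Kinv_lin] by simp
  ultimately show ?thesis using that by blast
qed

lemma lyap:
  assumes sol: "cara_sol (Kop Tq Tl M tau Teta) fs x" and x0: "x 0 \<in> Iset"
    and fp: "fs p = 0" and pI: "p \<in> Iset" and ab: "0 \<le> a" "a \<le> b"
  shows "V p (x b) + integral {a..b} (\<lambda>s. Wp p (x s)) \<le> V p (x a)"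
proof -
  obtain G where G: "G \<ge> 0" "\<And>s. s \<in> {0..b} \<Longrightarrow> norm (gtr x s) \<le> G"
    using sol_gbound[OF sol] ab by (metis order_trans)
  show ?thesis
  proof (rule lyap_interval[where x = x and g = "gtr x" and V = "V p" and w = "\<lambda>s. Wp p (x s)"
        and dV = "\<lambda>z v. inner (z - p) (P v)" and G = G and Cq = "nP/2" and Lq = nP])
    show "a \<le> b" by fact
    show "gtr x integrable_on {a..b}" using sol_diff[OF sol ab] by blast
    show "x t = x a + integral {a..t} (gtr x)" if "t \<in> {a..b}" for t
    proof -
      have "x t - x a = integral {a..t} (gtr x)" using sol_diff[OF sol, of a t] that ab by auto
      thus ?thesis by (simp add: algebra_simps)
    qed
    show "norm (gtr x s) \<le> G" if "s \<in> {a..b}" for s using G(2)[of s] that ab by auto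
    show "G \<ge> 0" by fact
    show "continuous_on {a..b} (\<lambda>s. Wp p (x s))"
      by (rule continuous_on_compose2[OF cont_Wp continuous_on_subset[OF sol_cont[OF sol, of b]]]) (use ab in auto)
    show "bounded_linear (\<lambda>v. inner (z - p) (P v))" for z
      by (rule bounded_linear_compose[OF bounded_linear_inner_right P_lin])
    show "V p (z + \<Delta>) \<le> V p z + inner (z - p) (P \<Delta>) + nP / 2 * (norm \<Delta>)\<^sup>2" for z \<Delta>
      using V_expand[of p z \<Delta>] quad_le[of \<Delta>] by simp
    show "inner (z - p) (P v) - inner (z' - p) (P v) \<le> nP * norm (z - z') * norm v" for z z' v
    proof -
      have "inner (z - p) (P v) - inner (z' - p) (P v) = inner (z - z') (P v)" by (simp add: inner_diff_left)
      also have "\<dots> \<le> norm (z - z') * norm (P v)" by (rule norm_cauchy_schwarz)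
      also have "\<dots> \<le> norm (z - z') * (nP * norm v)" by (intro mult_left_mono nP(1)) simp
      finally show ?thesis by (simp add: algebra_simps)
    qed
    show "inner (x s - p) (P (gtr x s)) \<le> - Wp p (x s)" if "s \<in> {a..b}" for s
    proof -
      have "x s \<in> Iset" using sol_Iset[OF sol x0, of s] that ab by auto
      thus ?thesis unfolding gtr_def P_Kinv by (rule key_ineq[OF fp pI])
    qed
    show "nP / 2 \<ge> 0" "nP \<ge> 0" using nP(2) by auto
  qed
qed

end

lemma infdist_lessE:
  assumes "infdist x A < d" "A \<noteq> {}"
  obtains a where "a \<in> A" "dist x a < d"
proof -
  have "(INF a\<in>A. dist x a) < d" using assms by (simp add: infdist_def)
  then obtain a where "a \<in> A" "dist x a < d"
    using cINF_less_iff[of A "\<lambda>a. dist x a" d] assms(2) by (auto intro: bdd_belowI[of _ 0])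
  thus ?thesis using that by blast
qed

lemma uc_comp_lip:
  fixes x :: "real \<Rightarrow> 'a::metric_space" and h :: "'a \<Rightarrow> 'b::metric_space"
  assumes uc: "uniformly_continuous_on K h" and inK: "\<And>t. t \<ge> 0 \<Longrightarrow> x t \<in> K"
    and lip: "\<And>s t. 0 \<le> s \<Longrightarrow> 0 \<le> t \<Longrightarrow> dist (x t) (x s) \<le> G * \<bar>t - s\<bar>" and G: "G \<ge> 0"
  shows "uniformly_continuous_on {0..} (\<lambda>t. h (x t))"
  unfolding uniformly_continuous_on_def
proof (intro allI impI)
  fix e :: real assume e: "e > 0"
  obtain d where d: "d > 0" and dd: "\<And>a b. a \<in> K \<Longrightarrow> b \<in> K \<Longrightarrow> dist b a < d \<Longrightarrow> dist (h b) (h a) < e"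
    using uc e unfolding uniformly_continuous_on_def by metis
  show "\<exists>d>0. \<forall>s\<in>{0..}. \<forall>t\<in>{0..}. dist t s < d \<longrightarrow> dist (h (x t)) (h (x s)) < e"
  proof (intro exI[of _ "d / (G + 1)"] conjI ballI impI)
    show "d / (G + 1) > 0" using d G by simp
    fix s t :: real assume st: "s \<in> {0..}" "t \<in> {0..}" "dist t s < d / (G + 1)"
    have "dist (x t) (x s) \<le> G * \<bar>t - s\<bar>" using lip st by auto
    also have "\<dots> \<le> G * (d / (G + 1))" using st G by (intro mult_left_mono) (auto simp: dist_real_def)
    also have "\<dots> < d" using d G by (simp add: field_simps)
    finally show "dist (h (x t)) (h (x s)) < e" using dd inK st by auto
  qed
qed

lemma mono_bdd_conv:
  fixes h :: "real \<Rightarrow> real"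
  assumes mono: "\<And>s t. 0 \<le> s \<Longrightarrow> s \<le> t \<Longrightarrow> h s \<le> h t" and bd: "\<And>t. t \<ge> 0 \<Longrightarrow> h t \<le> Bd"
  shows "\<exists>L. (h \<longlongrightarrow> L) at_top"
proof -
  define L where "L = Sup (h ` {0..})"
  have ne: "h ` {0..} \<noteq> {}" by auto
  have bdd: "bdd_above (h ` {0..})" using bd by (intro bdd_aboveI[of _ Bd]) auto
  have "(h \<longlongrightarrow> L) at_top"
  proof (rule order_tendstoI)
    fix a assume "a < L"
    then obtain t0 where t0: "t0 \<ge> 0" "a < h t0" using less_cSup_iff[OF ne bdd] unfolding L_def by auto
    show "\<forall>\<^sub>F t in at_top. a < h t"
      unfolding eventually_at_top_linorder using t0 mono by (intro exI[of _ t0]) (metis less_le_trans)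
  next
    fix a assume "L < a"
    moreover have "h t \<le> L" if "t \<ge> 0" for t unfolding L_def using bdd that by (intro cSup_upper) auto
    ultimately show "\<forall>\<^sub>F t in at_top. h t < a"
      unfolding eventually_at_top_linorder by (intro exI[of _ 0]) (auto intro: le_less_trans)
  qed
  thus ?thesis by blast
qed

lemma eventually_nonpos:
  fixes u v :: "real \<Rightarrow> real"
  assumes int: "\<And>s t. Tz \<le> s \<Longrightarrow> s \<le> t \<Longrightarrow> v integrable_on {s..t} \<and> u t - u s = integral {s..t} v"
    and nn: "\<And>t. t \<ge> Tz \<Longrightarrow> u t \<ge> 0"
    and vneg: "\<And>t. t \<ge> Tz \<Longrightarrow> v t \<le> 0"
    and vstrict: "\<And>t. t \<ge> Tz \<Longrightarrow> u t > 0 \<Longrightarrow> v t \<le> - \<beta>" and b: "\<beta> > 0"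
  shows "\<exists>T. \<forall>t\<ge>T. u t \<le> 0"
proof (cases "\<exists>T1\<ge>Tz. u T1 \<le> 0")
  case True
  then obtain T1 where T1: "T1 \<ge> Tz" "u T1 \<le> 0" by blast
  have "u t \<le> 0" if "t \<ge> T1" for t
  proof -
    have i: "v integrable_on {T1..t}" and e: "u t - u T1 = integral {T1..t} v" using int[of T1 t] T1 that by auto
    have "integral {T1..t} v \<le> integral {T1..t} (\<lambda>_. 0)"
      by (rule integral_le[OF i integrable_const_ivl]) (use vneg T1 in auto)
    hence "integral {T1..t} v \<le> 0" by simp
    thus ?thesis using e T1 by simp
  qed
  thus ?thesis by blast
next
  case False
  hence pos: "\<And>t. t \<ge> Tz \<Longrightarrow> u t > 0" by force
  define t where "t = Tz + (u Tz + 1) / \<beta>"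
  have tT: "t \<ge> Tz" using nn[of Tz] b by (simp add: t_def)
  have i: "v integrable_on {Tz..t}" and e: "u t - u Tz = integral {Tz..t} v" using int[of Tz t] tT by auto
  have "integral {Tz..t} v \<le> integral {Tz..t} (\<lambda>_. - \<beta>)"
    by (rule integral_le[OF i integrable_const_ivl]) (use vstrict pos in auto)
  also have "\<dots> = - \<beta> * (t - Tz)" using tT by simp
  also have "\<dots> = - (u Tz + 1)" using b by (simp add: t_def)
  finally have "u t \<le> -1" using e by simp
  thus ?thesis using nn[OF tT] by simp
qed

lemma sq_tendsto_zero:
  fixes f :: "real \<Rightarrow> real"
  assumes "((\<lambda>t. (f t)\<^sup>2) \<longlongrightarrow> 0) F"
  shows "(f \<longlongrightarrow> 0) F"
proof -
  have "((\<lambda>t. sqrt ((f t)\<^sup>2)) \<longlongrightarrow> sqrt 0) F" by (rule tendsto_real_sqrt[OF assms])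
  hence "((\<lambda>t. \<bar>f t\<bar>) \<longlongrightarrow> 0) F" by simp
  thus ?thesis by (simp add: tendsto_rabs_zero_iff)
qed

lemma dominated_zero:
  fixes g W :: "real \<Rightarrow> real"
  assumes "\<And>t. 0 \<le> g t" "\<And>t. g t \<le> k * W t" "(W \<longlongrightarrow> 0) F"
  shows "(g \<longlongrightarrow> 0) F"
proof (rule tendsto_sandwich[where f = "\<lambda>_. 0" and h = "\<lambda>t. k * W t"])
  show "\<forall>\<^sub>F n in F. 0 \<le> g n" "\<forall>\<^sub>F n in F. g n \<le> k * W n" using assms by auto
  show "((\<lambda>t. k * W t) \<longlongrightarrow> 0) F" using tendsto_mult_right_zero[OF assms(3)] by simp
qed simp

context sysloc begin

lemma V_nonneg: "V p z \<ge> 0"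
proof -
  have "mP / 2 * (norm (z - p))\<^sup>2 \<ge> 0" using mP_pos by simp
  thus ?thesis using V_lb[where p=p and z=z] by linarith
qed

lemma Wint:
  assumes sol: "cara_sol (Kop Tq Tl M tau Teta) fs x" and ab: "0 \<le> a" "a \<le> b"
  shows "(\<lambda>s. Wp p (x s)) integrable_on {a..b}"
  by (rule integrable_continuous_real, rule continuous_on_compose2[OF cont_Wp continuous_on_subset[OF sol_cont[OF sol, of b]]])
     (use ab in auto)

lemma V_mono:
  assumes sol: "cara_sol (Kop Tq Tl M tau Teta) fs x" and x0: "x 0 \<in> Iset"
    and fp: "fs p = 0" and pI: "p \<in> Iset" and st: "0 \<le> s" "s \<le> t"
  shows "V p (x t) \<le> V p (x s)"
proof -
  have "integral {s..t} (\<lambda>s. Wp p (x s)) \<ge> 0"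
    by (rule integral_nonneg[OF Wint[OF sol st]]) (rule Wp_nonneg)
  thus ?thesis using lyap[OF sol x0 fp pI st] by simp
qed

lemma dist_bound:
  assumes sol: "cara_sol (Kop Tq Tl M tau Teta) fs x" and x0: "x 0 \<in> Iset"
    and fp: "fs p = 0" and pI: "p \<in> Iset" and t: "0 \<le> t"
  shows "dist (x t) p \<le> sqrt (nP / mP) * dist (x 0) p"
proof -
  have v1: "V p (x t) \<le> V p (x 0)" using V_mono[OF sol x0 fp pI _ t] by simp
  have "mP / 2 * (norm (x t - p))\<^sup>2 \<le> nP / 2 * (norm (x 0 - p))\<^sup>2"
    using V_lb[where p=p and z="x t"] v1 V_ub[of p "x 0"] by linarith
  hence "mP * (norm (x t - p))\<^sup>2 \<le> nP * (norm (x 0 - p))\<^sup>2" by simp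
  hence "(norm (x t - p))\<^sup>2 \<le> (nP / mP) * (norm (x 0 - p))\<^sup>2"
    using mP_pos by (simp add: pos_le_divide_eq mult.commute mult.left_commute)
  hence "sqrt ((norm (x t - p))\<^sup>2) \<le> sqrt ((nP / mP) * (norm (x 0 - p))\<^sup>2)"
    by (rule real_sqrt_le_mono)
  also have "sqrt ((nP / mP) * (norm (x 0 - p))\<^sup>2) = sqrt (nP / mP) * norm (x 0 - p)"
    by (simp only: real_sqrt_mult real_sqrt_abs abs_norm_cancel)
  finally show ?thesis by (simp add: dist_norm)
qed

end

locale traj = sysloc C B H F D M Tq Teta Tl \<rho> tau c cbar d
  for C :: "real^'e::finite^'n::finite" and B :: "real^'e^'e" and H :: "real^('e+'e)^'n"
    and F :: "real^('e+'e)"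
    and D M Tq :: "real^'n^'n" and Teta :: "real^('e+'e)^('e+'e)"
    and Tl \<rho> :: real and tau c cbar d :: "real^'n" +
  fixes x :: "real \<Rightarrow> ('n, 'e) state" and p :: "('n, 'e) state"
  assumes sol: "cara_sol (Kop Tq Tl M tau Teta) fs x" and x0: "x 0 \<in> Iset"
    and fp: "fs p = 0" and pI: "p \<in> Iset"
begin

definition rad :: real where "rad = sqrt (nP / mP) * dist (x 0) p"

lemma in_ball: "t \<ge> 0 \<Longrightarrow> x t \<in> cball p rad"
  using dist_bound[OF sol x0 fp pI, of t] by (simp add: rad_def dist_commute)

lemma bnd: "bounded (x ` {0..})"
  by (rule bounded_subset[OF bounded_cball[of p rad]]) (use in_ball in auto)

lemma lip_ex: "\<exists>G\<ge>0. \<forall>s t. 0 \<le> s \<longrightarrow> 0 \<le> t \<longrightarrow> dist (x t) (x s) \<le> G * \<bar>t - s\<bar>"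
proof -
  have "compact (fhat ` cball p rad)" by (rule compact_continuous_image[OF cont_fhat compact_cball])
  then obtain a where a: "\<And>y. y \<in> fhat ` cball p rad \<Longrightarrow> norm y \<le> a"
    using compact_imp_bounded bounded_iff by metis
  define G where "G = onorm Kinv * max a 0"
  have G0: "G \<ge> 0" unfolding G_def using onorm_pos_le[OF Kinv_lin] by simp
  have gb: "norm (gtr x s) \<le> G" if s: "s \<ge> 0" for s
  proof -
    have "norm (gtr x s) \<le> onorm Kinv * norm (fs (x s))" unfolding gtr_def by (rule onorm[OF Kinv_lin])
    also have "\<dots> \<le> onorm Kinv * max a 0"
    proof (rule mult_left_mono)
      have "norm (fs (x s)) \<le> norm (fhat (x s))" by (rule fs_le_fhat)
      also have "\<dots> \<le> a" using a in_ball[OF s] by blast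
      finally show "norm (fs (x s)) \<le> max a 0" by simp
    qed (rule onorm_pos_le[OF Kinv_lin])
    finally show ?thesis by (simp add: G_def)
  qed
  have le: "dist (x t) (x s) \<le> G * \<bar>t - s\<bar>" if "0 \<le> s" "s \<le> t" for s t
  proof -
    have "gtr x integrable_on {s..t}" and e: "x t - x s = integral {s..t} (gtr x)"
      using sol_diff[OF sol that] by auto
    hence "norm (integral {s..t} (gtr x)) \<le> G * (t - s)"
      using gb that by (intro integral_norm_const_bound) auto
    thus ?thesis using e that by (simp add: dist_norm)
  qed
  have "dist (x t) (x s) \<le> G * \<bar>t - s\<bar>" if "0 \<le> s" "0 \<le> t" for s t
  proof (cases "s \<le> t")
    case True thus ?thesis using le that by blast
  next
    case False thus ?thesis using le[of t s] that by (simp add: dist_commute abs_minus_commute)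
  qed
  thus ?thesis using G0 by blast
qed

lemma ucx:
  fixes h :: "('n, 'e) state \<Rightarrow> 'b::metric_space"
  assumes h: "continuous_on UNIV h"
  shows "uniformly_continuous_on {0..} (\<lambda>t. h (x t))"
proof -
  obtain G where G: "G \<ge> 0" "\<And>s t. 0 \<le> s \<Longrightarrow> 0 \<le> t \<Longrightarrow> dist (x t) (x s) \<le> G * \<bar>t - s\<bar>"
    using lip_ex by blast
  have "uniformly_continuous_on (cball p rad) h"
    by (rule compact_uniformly_continuous[OF continuous_on_subset[OF h subset_UNIV] compact_cball])
  thus ?thesis by (rule uc_comp_lip[OF _ in_ball G(2) G(1)])
qed

lemma W_split:
  assumes "0 \<le> s" "s \<le> t"
  shows "(\<lambda>s. Wp p (x s)) integrable_on {s..t} \<and>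
        integral {0..t} (\<lambda>s. Wp p (x s)) - integral {0..s} (\<lambda>s. Wp p (x s)) = integral {s..t} (\<lambda>s. Wp p (x s))"
proof
  show "(\<lambda>s. Wp p (x s)) integrable_on {s..t}" by (rule Wint[OF sol assms])
  have wi: "(\<lambda>s. Wp p (x s)) integrable_on {0..t}" by (rule Wint[OF sol order_refl]) (use assms in linarith)
  have comb: "integral {0..s} (\<lambda>s. Wp p (x s)) + integral {s..t} (\<lambda>s. Wp p (x s)) = integral {0..t} (\<lambda>s. Wp p (x s))"
    by (rule Henstock_Kurzweil_Integration.integral_combine[OF assms wi])
  show "integral {0..t} (\<lambda>s. Wp p (x s)) - integral {0..s} (\<lambda>s. Wp p (x s)) = integral {s..t} (\<lambda>s. Wp p (x s))"
    unfolding comb[symmetric] by simp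
qed

lemma W_mono:
  assumes "0 \<le> s" "s \<le> t"
  shows "integral {0..s} (\<lambda>s. Wp p (x s)) \<le> integral {0..t} (\<lambda>s. Wp p (x s))"
proof (rule integral_subset_le)
  show "{0..s} \<subseteq> {0..t}" using assms by auto
  show "(\<lambda>s. Wp p (x s)) integrable_on {0..s}" by (rule Wint[OF sol order_refl assms(1)])
  show "(\<lambda>s. Wp p (x s)) integrable_on {0..t}" by (rule Wint[OF sol order_refl]) (use assms in linarith)
  show "\<forall>r\<in>{0..t}. 0 \<le> Wp p (x r)" using Wp_nonneg by blast
qed

lemma W_bd:
  assumes "t \<ge> 0"
  shows "integral {0..t} (\<lambda>s. Wp p (x s)) \<le> V p (x 0)"
proof -
  have "V p (x t) + integral {0..t} (\<lambda>s. Wp p (x s)) \<le> V p (x 0)" by (rule lyap[OF sol x0 fp pI order_refl assms])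
  moreover have "V p (x t) \<ge> 0" by (rule V_nonneg)
  ultimately show ?thesis by linarith
qed

lemma W_to_0: "((\<lambda>t. Wp p (x t)) \<longlongrightarrow> 0) at_top"
proof -
  obtain L where L: "((\<lambda>t. integral {0..t} (\<lambda>s. Wp p (x s))) \<longlongrightarrow> L) at_top"
    using mono_bdd_conv[of "\<lambda>t. integral {0..t} (\<lambda>s. Wp p (x s))" "V p (x 0)"] W_mono W_bd by blast
  show ?thesis
    by (rule barbalat[where h = "\<lambda>t. integral {0..t} (\<lambda>s. Wp p (x s))", OF W_split ucx[OF cont_Wp] L])
qed

lemma Wp_ge:
  "eps j * ((piF z - piF p) $ j)\<^sup>2 \<le> Wp p z"
  "eps j * ((fst (snd (snd (snd (snd z)))) - fst (snd (snd (snd (snd p))))) $ j)\<^sup>2 \<le> Wp p z"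
  "D $ j $ j * ((fst (snd (snd (snd z))) - fst (snd (snd (snd p)))) $ j)\<^sup>2 \<le> Wp p z"
proof -
  define T where "T j = eps j * (((piF z - piF p) $ j)\<^sup>2 + ((fst (snd (snd (snd (snd z)))) - fst (snd (snd (snd (snd p))))) $ j)\<^sup>2)
              + D $ j $ j * ((fst (snd (snd (snd z))) - fst (snd (snd (snd p)))) $ j)\<^sup>2" for j
  have Tn: "T i \<ge> 0" for i unfolding T_def using eps_pos[of i] diag_pos[OF D, of i]
    by (intro add_nonneg_nonneg mult_nonneg_nonneg) auto
  have "T j \<le> Wp p z" unfolding Wp_def T_def[symmetric] by (rule member_le_sum) (use Tn in auto)
  moreover have "eps j * ((piF z - piF p) $ j)\<^sup>2 \<le> T j" "eps j * ((fst (snd (snd (snd (snd z)))) - fst (snd (snd (snd (snd p))))) $ j)\<^sup>2 \<le> T j"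
    "D $ j $ j * ((fst (snd (snd (snd z))) - fst (snd (snd (snd p)))) $ j)\<^sup>2 \<le> T j"
    unfolding T_def using eps_pos[of j] diag_pos[OF D, of j] by (auto simp: algebra_simps intro!: mult_nonneg_nonneg add_nonneg_nonneg)
  ultimately show "eps j * ((piF z - piF p) $ j)\<^sup>2 \<le> Wp p z"
    "eps j * ((fst (snd (snd (snd (snd z)))) - fst (snd (snd (snd (snd p))))) $ j)\<^sup>2 \<le> Wp p z"
    "D $ j $ j * ((fst (snd (snd (snd z))) - fst (snd (snd (snd p)))) $ j)\<^sup>2 \<le> Wp p z" by linarith+
qed

lemma conv_of_sq:
  fixes f :: "real \<Rightarrow> real"
  assumes k: "k > 0" and le: "\<And>t. k * (f t - l)\<^sup>2 \<le> Wp p (x t)"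
  shows "(f \<longlongrightarrow> l) at_top"
proof -
  have "((\<lambda>t. (f t - l)\<^sup>2) \<longlongrightarrow> 0) at_top"
  proof (rule dominated_zero[where k = "1/k" and W = "\<lambda>t. Wp p (x t)"])
    show "(f t - l)\<^sup>2 \<le> 1 / k * Wp p (x t)" for t using le[of t] k by (simp add: field_simps)
  qed (use W_to_0 in auto)
  hence "((\<lambda>t. f t - l) \<longlongrightarrow> 0) at_top" by (rule sq_tendsto_zero)
  thus ?thesis by (simp add: LIM_zero_iff)
qed

lemma pi_conv: "((\<lambda>t. piF (x t) $ j) \<longlongrightarrow> piF p $ j) at_top"
  by (rule conv_of_sq[OF eps_pos[of j]]) (use Wp_ge(1) in simp)

lemma al_conv: "((\<lambda>t. fst (snd (snd (snd (snd (x t))))) $ j) \<longlongrightarrow> fst (snd (snd (snd (snd p)))) $ j) at_top"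
  by (rule conv_of_sq[OF eps_pos[of j]]) (use Wp_ge(2) in simp)

lemma om_conv: "((\<lambda>t. fst (snd (snd (snd (x t)))) $ j) \<longlongrightarrow> fst (snd (snd (snd p))) $ j) at_top"
  by (rule conv_of_sq[OF diag_pos[OF D, of j]]) (use Wp_ge(3) in simp)

end

context sysloc begin

definition ua :: "'n \<Rightarrow> ('n, 'e) state \<Rightarrow> real" where
  "ua j z = (qF z $ j - (piF z $ j - cbar $ j) / c $ j) / tau $ j"

definition uw :: "'n \<Rightarrow> ('n, 'e) state \<Rightarrow> real" where
  "uw j z = (qF z - d - D *v fst (snd (snd (snd z))) - C *v (B *v fst (snd z))) $ j / M $ j $ j"

lemma gtr_al: "fst (snd (snd (snd (snd (gtr x r))))) $ j = ua j (x r)"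
  by (simp add: gtr_def Kinv_def fs_def ua_def)

lemma gtr_om: "fst (snd (snd (snd (gtr x r)))) $ j = uw j (x r)"
  by (simp add: gtr_def Kinv_def fs_def uw_def del: transpose_matrix_vector)

lemma cont_ua: "continuous_on S (ua j)"
  unfolding ua_def by (intro continuous_intros cont_piF cont_qF) (auto simp: c_nz tau_nz)

lemma cont_uw: "continuous_on S (uw j)"
  unfolding uw_def by (intro continuous_intros cont_qF) (auto simp: diag_nz[OF M])

lemma lin_al: "bounded_linear (\<lambda>w::('n, 'e) state. fst (snd (snd (snd (snd w)))) $ j)"
proof -
  have "linear (\<lambda>w::('n, 'e) state. fst (snd (snd (snd (snd w)))) $ j)" by (rule linearI) simp_all
  thus ?thesis by (simp add: linear_conv_bounded_linear)
qed

lemma lin_om: "bounded_linear (\<lambda>w::('n, 'e) state. fst (snd (snd (snd w))) $ j)"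
proof -
  have "linear (\<lambda>w::('n, 'e) state. fst (snd (snd (snd w))) $ j)" by (rule linearI) simp_all
  thus ?thesis by (simp add: linear_conv_bounded_linear)
qed

lemma fs_zero_iff: "fs z = 0 \<longleftrightarrow>
   piF z - fst (snd (snd (snd (snd z)))) = 0 \<and>
   transpose C *v fst (snd (snd (snd z))) = 0 \<and>
   (\<Sum>j\<in>UNIV. (qF z - d) $ j) = 0 \<and>
   qF z - d - D *v fst (snd (snd (snd z))) - C *v (B *v fst (snd z)) = 0 \<and>
   (\<chi> j. qF z $ j - (piF z $ j - cbar $ j) / c $ j) = 0 \<and>
   proj_plus (yF z) (snd (snd (snd (snd (snd z))))) = 0"
  unfolding fs_def zero_prod_def prod.inject neg_equal_0_iff_equal ..

lemma ua_zero: "ua j z = 0 \<longleftrightarrow> qF z $ j = (piF z $ j - cbar $ j) / c $ j"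
  by (simp add: ua_def tau_nz)

lemma yF_comp: "yF z $ e = (\<Sum>j\<in>UNIV. transpose H $ e $ j * (qF z $ j - d $ j)) - F $ e"
  by (simp add: yF_def matrix_vector_mult_def del: transpose_matrix_vector)

end

context traj begin

lemma ua_to_0: "((\<lambda>t. ua j (x t)) \<longlongrightarrow> 0) at_top"
proof (rule barbalat[where h = "\<lambda>t. fst (snd (snd (snd (snd (x t))))) $ j"])
  show "(\<lambda>r. ua j (x r)) integrable_on {s..t} \<and>
        fst (snd (snd (snd (snd (x t))))) $ j - fst (snd (snd (snd (snd (x s))))) $ j = integral {s..t} (\<lambda>r. ua j (x r))"
    if "0 \<le> s" "s \<le> t" for s t
    using sol_comp[OF sol that lin_al] by (simp add: gtr_al)
qed (rule ucx[OF cont_ua], rule al_conv)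

lemma uw_to_0: "((\<lambda>t. uw j (x t)) \<longlongrightarrow> 0) at_top"
proof (rule barbalat[where h = "\<lambda>t. fst (snd (snd (snd (x t)))) $ j"])
  show "(\<lambda>r. uw j (x r)) integrable_on {s..t} \<and>
        fst (snd (snd (snd (x t)))) $ j - fst (snd (snd (snd (x s)))) $ j = integral {s..t} (\<lambda>r. uw j (x r))"
    if "0 \<le> s" "s \<le> t" for s t
    using sol_comp[OF sol that lin_om] by (simp add: gtr_om)
qed (rule ucx[OF cont_uw], rule om_conv)

lemma fpF: "piF p - fst (snd (snd (snd (snd p)))) = 0"
   "transpose C *v fst (snd (snd (snd p))) = 0"
   "(\<Sum>j\<in>UNIV. (qF p - d) $ j) = 0"
   "qF p - d - D *v fst (snd (snd (snd p))) - C *v (B *v fst (snd p)) = 0"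
   "(\<chi> j. qF p $ j - (piF p $ j - cbar $ j) / c $ j) = 0"
   "proj_plus (yF p) (snd (snd (snd (snd (snd p))))) = 0"
  using fp unfolding fs_zero_iff by blast+

lemma ua_p: "ua j p = 0"
  using fpF(5) by (simp add: ua_def vec_eq_iff)

lemma q_conv: "((\<lambda>t. qF (x t) $ j) \<longlongrightarrow> qF p $ j) at_top"
proof -
  have e: "qF z $ j = tau $ j * ua j z + (piF z $ j - cbar $ j) / c $ j" for z
    by (simp add: ua_def tau_nz)
  have "((\<lambda>t. tau $ j * ua j (x t) + (piF (x t) $ j - cbar $ j) / c $ j) \<longlongrightarrow> tau $ j * 0 + (piF p $ j - cbar $ j) / c $ j) at_top"
    by (intro tendsto_add tendsto_mult[OF tendsto_const ua_to_0] tendsto_divide[OF tendsto_diff[OF pi_conv tendsto_const] tendsto_const c_nz])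
  moreover have "qF p $ j = tau $ j * 0 + (piF p $ j - cbar $ j) / c $ j" using ua_p[of j] e[of p] by simp
  ultimately show ?thesis unfolding e[symmetric] by simp
qed

lemma y_conv: "((\<lambda>t. yF (x t) $ e) \<longlongrightarrow> yF p $ e) at_top"
  unfolding yF_comp by (intro tendsto_intros q_conv)

lemma eta_eventually:
  assumes neg: "yF p $ e < 0"
  shows "\<exists>T. \<forall>t\<ge>T. snd (snd (snd (snd (snd (x t))))) $ e \<le> 0"
proof -
  have "\<forall>\<^sub>F t in at_top. yF (x t) $ e < yF p $ e / 2"
    using y_conv neg by (intro order_tendstoD(2)) auto
  then obtain T0 where T0: "\<And>t. t \<ge> T0 \<Longrightarrow> yF (x t) $ e < yF p $ e / 2"
    unfolding eventually_at_top_linorder by blast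
  define T1 where "T1 = max T0 0"
  have Te: "Teta $ e $ e > 0" by (rule diag_pos[OF Teta])
  show ?thesis
  proof (rule eventually_nonpos[where Tz = T1 and v = "\<lambda>r. snd (snd (snd (snd (snd (gtr x r))))) $ e"
        and \<beta> = "- (yF p $ e / 2) / Teta $ e $ e"])
    show "(\<lambda>r. snd (snd (snd (snd (snd (gtr x r))))) $ e) integrable_on {s..t} \<and>
          snd (snd (snd (snd (snd (x t))))) $ e - snd (snd (snd (snd (snd (x s))))) $ e =
          integral {s..t} (\<lambda>r. snd (snd (snd (snd (snd (gtr x r))))) $ e)"
      if "T1 \<le> s" "s \<le> t" for s t
      using sol_comp[OF sol _ that(2) lin_eta] that by (simp add: T1_def)
    show "snd (snd (snd (snd (snd (x t))))) $ e \<ge> 0" if "t \<ge> T1" for t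
      using sol_Iset[OF sol x0, of t] that by (simp add: T1_def Iset_iff)
    show "snd (snd (snd (snd (snd (gtr x t))))) $ e \<le> 0" if "t \<ge> T1" for t
    proof -
      have "yF (x t) $ e < 0" using T0[of t] that neg by (simp add: T1_def)
      hence "proj_plus (yF (x t)) (snd (snd (snd (snd (snd (x t)))))) $ e \<le> 0"
        by (simp add: proj_plus_def)
      thus ?thesis unfolding gtr_eta using Te by (simp add: divide_nonpos_pos)
    qed
    show "snd (snd (snd (snd (snd (gtr x t))))) $ e \<le> - (- (yF p $ e / 2) / Teta $ e $ e)"
      if "t \<ge> T1" "snd (snd (snd (snd (snd (x t))))) $ e > 0" for t
    proof -
      have "proj_plus (yF (x t)) (snd (snd (snd (snd (snd (x t)))))) $ e = yF (x t) $ e"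
        using that(2) by (simp add: proj_plus_def)
      hence "proj_plus (yF (x t)) (snd (snd (snd (snd (snd (x t)))))) $ e \<le> yF p $ e / 2"
        using T0[of t] that(1) by (simp add: T1_def)
      hence "proj_plus (yF (x t)) (snd (snd (snd (snd (snd (x t)))))) $ e / Teta $ e $ e \<le> (yF p $ e / 2) / Teta $ e $ e"
        using Te by (rule divide_right_mono[OF _ less_imp_le])
      thus ?thesis unfolding gtr_eta by simp
    qed
    show "- (yF p $ e / 2) / Teta $ e $ e > 0" using neg Te by (simp add: field_simps)
  qed
qed

end

lemma along_subseq:
  fixes f :: "real \<Rightarrow> 'a::topological_space"
  assumes r: "strict_mono r" and f: "(f \<longlongrightarrow> L) at_top"
  shows "(\<lambda>k. f (real (r k))) \<longlonglongrightarrow> L"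
proof -
  have "filterlim (\<lambda>k. real (r k)) at_top sequentially"
    by (rule filterlim_compose[OF filterlim_real_sequentially filterlim_subseq[OF r]])
  thus ?thesis using filterlim_compose[OF f] by blast
qed

context traj begin

lemma limpt: "\<exists>xb r. strict_mono r \<and> (\<lambda>k. x (real (r k))) \<longlonglongrightarrow> xb"
proof -
  have "bounded (range (\<lambda>n::nat. x (real n)))" by (rule bounded_subset[OF bnd]) auto
  from bounded_imp_convergent_subsequence[OF this] show ?thesis by (auto simp: o_def)
qed

lemma lim_id:
  fixes \<phi> :: "('n, 'e) state \<Rightarrow> real"
  assumes cont: "continuous_on UNIV \<phi>" and r: "strict_mono r" and xr: "(\<lambda>k. x (real (r k))) \<longlonglongrightarrow> xb"
    and lim: "((\<lambda>t. \<phi> (x t)) \<longlongrightarrow> L) at_top"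
  shows "\<phi> xb = L"
proof -
  have "(\<lambda>k. \<phi> (x (real (r k)))) \<longlonglongrightarrow> \<phi> xb"
    by (rule continuous_on_tendsto_compose[OF cont xr]) auto
  moreover have "(\<lambda>k. \<phi> (x (real (r k)))) \<longlonglongrightarrow> L" by (rule along_subseq[OF r lim])
  ultimately show ?thesis by (rule LIMSEQ_unique)
qed

lemma sub_ge:
  fixes r :: "nat \<Rightarrow> nat"
  assumes r: "strict_mono r"
  shows "\<exists>N. \<forall>n\<ge>N. real (r n) \<ge> T"
proof -
  obtain N :: nat where N: "real N \<ge> T" using real_arch_simple by blast
  have "real (r n) \<ge> T" if "n \<ge> N" for n
  proof -
    have "N \<le> r n" using seq_suble[OF r, of n] that by simp
    thus ?thesis using N by (meson of_nat_le_iff order_trans)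
  qed
  thus ?thesis by blast
qed

lemma conv_main: "\<exists>xb. fs xb = 0 \<and> xb \<in> Iset \<and> (x \<longlongrightarrow> xb) at_top"
proof -
  obtain xb r where r: "strict_mono r" and xr: "(\<lambda>k. x (real (r k))) \<longlonglongrightarrow> xb" using limpt by blast
  have h1: "piF xb $ j = piF p $ j" for j
    by (rule lim_id[OF _ r xr pi_conv]) (intro continuous_intros cont_piF)
  have h2: "fst (snd (snd (snd (snd xb)))) $ j = fst (snd (snd (snd (snd p)))) $ j" for j
    by (rule lim_id[OF _ r xr al_conv]) (intro continuous_intros)
  have h3: "fst (snd (snd (snd xb))) $ j = fst (snd (snd (snd p))) $ j" for j
    by (rule lim_id[OF _ r xr om_conv]) (intro continuous_intros)
  have h4: "ua j xb = 0" for j by (rule lim_id[OF cont_ua r xr ua_to_0])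
  have h5: "uw j xb = 0" for j by (rule lim_id[OF cont_uw r xr uw_to_0])
  have etalim: "(\<lambda>k. snd (snd (snd (snd (snd (x (real (r k))))))) $ e) \<longlonglongrightarrow> snd (snd (snd (snd (snd xb)))) $ e" for e
  proof -
    have "continuous_on UNIV (\<lambda>z::('n, 'e) state. snd (snd (snd (snd (snd z)))) $ e)" by (intro continuous_intros)
    from continuous_on_tendsto_compose[OF this xr] show ?thesis by simp
  qed
  have h6: "snd (snd (snd (snd (snd xb)))) $ e \<ge> 0" for e
  proof (rule LIMSEQ_le_const[OF etalim])
    show "\<exists>N. \<forall>n\<ge>N. 0 \<le> snd (snd (snd (snd (snd (x (real (r n))))))) $ e"
      using sol_Iset[OF sol x0] by (auto simp: Iset_iff)
  qed
  have h7: "snd (snd (snd (snd (snd xb)))) $ e \<le> 0" if neg: "yF p $ e < 0" for e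
  proof (rule LIMSEQ_le_const2[OF etalim])
    obtain T where T: "\<And>t. t \<ge> T \<Longrightarrow> snd (snd (snd (snd (snd (x t))))) $ e \<le> 0"
      using eta_eventually[OF neg] by blast
    obtain N where "\<And>n. n \<ge> N \<Longrightarrow> real (r n) \<ge> T" using sub_ge[OF r] by blast
    thus "\<exists>N. \<forall>n\<ge>N. snd (snd (snd (snd (snd (x (real (r n))))))) $ e \<le> 0" using T by blast
  qed
  have piE: "piF xb = piF p" using h1 by (simp add: vec_eq_iff)
  have alE: "fst (snd (snd (snd (snd xb)))) = fst (snd (snd (snd (snd p))))" using h2 by (simp add: vec_eq_iff)
  have omE: "fst (snd (snd (snd xb))) = fst (snd (snd (snd p)))" using h3 by (simp add: vec_eq_iff)
  have qE: "qF xb = qF p"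
  proof -
    have "qF xb $ j = qF p $ j" for j
      using h4[of j] ua_p[of j] h1[of j] unfolding ua_zero by simp
    thus ?thesis by (simp add: vec_eq_iff)
  qed
  have yE: "yF xb = yF p" by (simp add: yF_def qE)
  have ypn: "yF p $ e \<le> 0" for e
  proof -
    have "proj_plus (yF p) (snd (snd (snd (snd (snd p))))) $ e = 0" using fpF(6) by simp
    thus ?thesis by (simp add: proj_plus_def split: if_splits)
  qed
  have fz: "fs xb = 0"
    unfolding fs_zero_iff
  proof (intro conjI)
    show "piF xb - fst (snd (snd (snd (snd xb)))) = 0" using fpF(1) piE alE by simp
    show "transpose C *v fst (snd (snd (snd xb))) = 0" using fpF(2) omE by simp
    show "(\<Sum>j\<in>UNIV. (qF xb - d) $ j) = 0" using fpF(3) qE by simp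
    show "qF xb - d - D *v fst (snd (snd (snd xb))) - C *v (B *v fst (snd xb)) = 0"
      using h5 by (simp add: uw_def vec_eq_iff diag_nz[OF M] del: transpose_matrix_vector)
    show "(\<chi> j. qF xb $ j - (piF xb $ j - cbar $ j) / c $ j) = 0"
      using h4 by (simp add: ua_zero vec_eq_iff)
    show "proj_plus (yF xb) (snd (snd (snd (snd (snd xb))))) = 0"
      unfolding yE vec_eq_iff proj_plus_def
    proof
      fix e
      show "(\<chi> e. if 0 < yF p $ e \<or> 0 < snd (snd (snd (snd (snd xb)))) $ e then yF p $ e else 0) $ e = 0 $ e"
      proof (cases "yF p $ e < 0")
        case True thus ?thesis using h7[OF True] ypn[of e] by simp
      next
        case False thus ?thesis using ypn[of e] by simp
      qed
    qed
  qed
  have xbI: "xb \<in> Iset" using h6 by (simp add: Iset_iff)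
  have Vlim: "((\<lambda>t. V xb (x t)) \<longlongrightarrow> 0) at_top"
  proof (rule tendstoI)
    fix \<epsilon> :: real assume e: "\<epsilon> > 0"
    have "(\<lambda>k. V xb (x (real (r k)))) \<longlonglongrightarrow> V xb xb"
      by (rule continuous_on_tendsto_compose[OF cont_V[of UNIV] xr]) auto
    hence "(\<lambda>k. V xb (x (real (r k)))) \<longlonglongrightarrow> 0" by (simp add: V_def)
    then obtain k where k: "V xb (x (real (r k))) < \<epsilon>"
      using e by (auto dest!: order_tendstoD(2)[of _ 0 sequentially \<epsilon>] simp: eventually_sequentially) blast
    have "\<forall>t\<ge>real (r k). dist (V xb (x t)) 0 < \<epsilon>"
    proof (intro allI impI)
      fix t assume t: "t \<ge> real (r k)"
      have "V xb (x t) \<le> V xb (x (real (r k)))" by (rule V_mono[OF sol x0 fz xbI _ t]) simp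
      thus "dist (V xb (x t)) 0 < \<epsilon>" using k V_nonneg[of xb "x t"] by simp
    qed
    thus "\<forall>\<^sub>F t in at_top. dist (V xb (x t)) 0 < \<epsilon>" unfolding eventually_at_top_linorder by blast
  qed
  have "((\<lambda>t. (norm (x t - xb))\<^sup>2) \<longlongrightarrow> 0) at_top"
  proof (rule dominated_zero[where k = "2 / mP" and W = "\<lambda>t. V xb (x t)"])
    show "(norm (x t - xb))\<^sup>2 \<le> 2 / mP * V xb (x t)" for t
      using V_lb[where p = xb and z = "x t"] mP_pos by (simp add: field_simps)
  qed (use Vlim in auto)
  hence "((\<lambda>t. norm (x t - xb)) \<longlongrightarrow> 0) at_top" by (rule sq_tendsto_zero)
  hence "(x \<longlongrightarrow> xb) at_top" by (simp add: tendsto_norm_zero_iff LIM_zero_iff)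
  thus ?thesis using fz xbI by blast
qed

end

theorem theorem5:
  fixes src tgt :: "'e::finite \<Rightarrow> 'n::finite"
    and B :: "real^'e^'e" and D M Tq :: "real^'n^'n" and Teta :: "real^('e + 'e)^('e + 'e)"
    and Tl \<rho> :: real and tau c cbar d :: "real^'n" and Fup Flow :: "real^'e"
  assumes graph: "digraph_ok src tgt" and conn: "graph_connected src tgt"
    and B: "pos_diag B" and D: "pos_diag D" and M: "pos_diag M"
    and Tq: "pos_diag Tq" and Teta: "pos_diag Teta" and Tl: "Tl > 0"
    and tau: "\<forall>j. tau $ j > 0"
    and c: "\<forall>j. c $ j > 0"
    and rho: "0 < \<rho>" "\<rho> < 4 * Min (range (\<lambda>j. c $ j))"
    and Enonempty: "{x \<in> Iset. rhs src tgt B D c cbar \<rho> d Fup Flow x = 0} \<noteq> {}"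
  shows
    "let K = Kop Tq Tl M tau Teta; f = rhs src tgt B D c cbar \<rho> d Fup Flow;
         E = {x \<in> Iset. f x = 0}
     in
      (\<forall>\<epsilon>>0. \<exists>\<delta>>0. \<forall>x. cara_sol K f x \<and> x 0 \<in> Iset \<and> infdist (x 0) E < \<delta>
           \<longrightarrow> (\<forall>t\<ge>0. infdist (x t) E < \<epsilon>)) \<and>
      (\<forall>x. cara_sol K f x \<and> x 0 \<in> Iset \<longrightarrow>
           bounded (x ` {0..}) \<and>
           (\<exists>p\<in>E. (x \<longlongrightarrow> p) at_top))"
proof -
  interpret S: sysloc "incidence src tgt" B "Hmat (incidence src tgt) B" "Fvec Fup Flow" D M Tq Teta Tl \<rho> tau c cbar d
    by (unfold_locales) (use B D M Tq Teta Tl tau c rho in auto)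
  have rhs_eq: "rhs src tgt B D c cbar \<rho> d Fup Flow = S.fs"
  proof (rule ext)
    fix z :: "('n, 'e) state"
    obtain qh th l om al et where z: "z = (qh, th, l, om, al, et)" by (metis prod.collapse)
    show "rhs src tgt B D c cbar \<rho> d Fup Flow z = S.fs z"
      unfolding z rhs_def S.fs_def S.piF_def S.qF_def S.yF_def Let_def by simp
  qed
  define E where "E = {x \<in> Iset. S.fs x = 0}"
  have Ene: "E \<noteq> {}" using Enonempty unfolding E_def rhs_eq .
  obtain p0 where p0: "p0 \<in> E" using Ene by blast
  define \<kappa> where "\<kappa> = sqrt (S.nP / S.mP)"
  have \<kappa>0: "\<kappa> \<ge> 0" unfolding \<kappa>_def using S.nP(2) S.mP_pos by simp
  have part1: "\<forall>\<epsilon>>0. \<exists>\<delta>>0. \<forall>x. cara_sol (Kop Tq Tl M tau Teta) S.fs x \<and> x 0 \<in> Iset \<and> infdist (x 0) E < \<delta>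
           \<longrightarrow> (\<forall>t\<ge>0. infdist (x t) E < \<epsilon>)"
  proof (intro allI impI)
    fix \<epsilon> :: real assume e: "\<epsilon> > 0"
    show "\<exists>\<delta>>0. \<forall>x. cara_sol (Kop Tq Tl M tau Teta) S.fs x \<and> x 0 \<in> Iset \<and> infdist (x 0) E < \<delta>
           \<longrightarrow> (\<forall>t\<ge>0. infdist (x t) E < \<epsilon>)"
    proof (intro exI[of _ "\<epsilon> / (\<kappa> + 1)"] conjI allI impI)
      show "\<epsilon> / (\<kappa> + 1) > 0" using e \<kappa>0 by simp
      fix x :: "real \<Rightarrow> ('n, 'e) state" and t :: real
      assume H: "cara_sol (Kop Tq Tl M tau Teta) S.fs x \<and> x 0 \<in> Iset \<and> infdist (x 0) E < \<epsilon> / (\<kappa> + 1)"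
        and t: "t \<ge> 0"
      obtain p where p: "p \<in> E" "dist (x 0) p < \<epsilon> / (\<kappa> + 1)" using infdist_lessE[of "x 0" E] H Ene by blast
      have "infdist (x t) E \<le> dist (x t) p" by (rule infdist_le[OF p(1)])
      also have "\<dots> \<le> \<kappa> * dist (x 0) p"
        unfolding \<kappa>_def using p(1) H t by (intro S.dist_bound) (auto simp: E_def)
      also have "\<dots> \<le> \<kappa> * (\<epsilon> / (\<kappa> + 1))" using p(2) \<kappa>0 by (intro mult_left_mono) auto
      also have "\<dots> < \<epsilon>" using e \<kappa>0 by (simp add: field_simps)
      finally show "infdist (x t) E < \<epsilon>" .
    qed
  qed
  have part2: "\<forall>x. cara_sol (Kop Tq Tl M tau Teta) S.fs x \<and> x 0 \<in> Iset \<longrightarrow>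
           bounded (x ` {0..}) \<and> (\<exists>p\<in>E. (x \<longlongrightarrow> p) at_top)"
  proof (intro allI impI)
    fix x :: "real \<Rightarrow> ('n, 'e) state"
    assume H: "cara_sol (Kop Tq Tl M tau Teta) S.fs x \<and> x 0 \<in> Iset"
    interpret T: traj "incidence src tgt" B "Hmat (incidence src tgt) B" "Fvec Fup Flow" D M Tq Teta Tl \<rho> tau c cbar d x p0
      by (unfold_locales) (use H p0 in \<open>auto simp: E_def\<close>)
    obtain xb where xb: "S.fs xb = 0" "xb \<in> Iset" "(x \<longlongrightarrow> xb) at_top" using T.conv_main by blast
    show "bounded (x ` {0..}) \<and> (\<exists>p\<in>E. (x \<longlongrightarrow> p) at_top)"
    proof
      show "bounded (x ` {0..})" by (rule T.bnd)
      have "xb \<in> E" using xb by (simp add: E_def)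
      thus "\<exists>p\<in>E. (x \<longlongrightarrow> p) at_top" using xb(3) by blast
    qed
  qed
  show ?thesis unfolding Let_def rhs_eq E_def[symmetric] using part1 part2 by blast
qed

end
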